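(* Let $m,n\geq 2$. Each of the following six functions is not Banach-Mazur computable: (I) $g_{\text{inv}}:\mathbb{C}^{m\times n}\to\mathbb{C}^{n\times m}$, $g_{\text{inv}}(A)=A^\dagger$; (II) $g_{\text{norm}}:\mathbb{C}^{m\times n}\to\mathbb{R}$, $g_{\text{norm}}(A)=\|A^\dagger\|_F$; (III) $\Psi_{\text{lsq}}:\mathbb{C}^{m\times n}\times\mathbb{C}^m\to\mathbb{R}$, $\Psi_{\text{lsq}}(A,b)=\min_{x\in\mathbb{C}^n}\|Ax-b\|_2$; (IV) $\Psi_{\text{sol}}:\mathbb{C}^{m\times n}\times\mathbb{C}^m\to\mathbb{C}^n$, $\Psi_{\text{sol}}(A,b)=\hat{x}_{(A,b)}$; (V) $\Psi_{\text{norm}}:\mathbb{C}^{m\times n}\times\mathbb{C}^m\to\mathbb{R}$, $\Psi_{\text{norm}}(A,b)=\|\hat{x}_{(A,b)}\|_2=\|A^\dagger b\|_2$; (VI) $\kappa:\mathbb{C}^{m\times n}\to\mathbb{R}$, $\kappa(A)=\|A\|_F\,\|A^\dagger\|_F$.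
   Context: For $A\in\mathbb{C}^{m\times n}$, $A^\dagger\in\mathbb{C}^{n\times m}$ denotes the Moore–Penrose pseudoinverse, the unique matrix with $AA^\dagger A=A$, $A^\dagger AA^\dagger=A^\dagger$, $(AA^\dagger)^H=AA^\dagger$, $(A^\dagger A)^H=A^\dagger A$. For $b\in\mathbb{C}^m$, $\hat{x}_{(A,b)}=A^\dagger b$ is the minimizer of $\|Ax-b\|_2$ over $x\in\mathbb{C}^n$ with minimal Euclidean norm. $\|\cdot\|_F$ is the Frobenius norm, $\|\cdot\|_2$ the Euclidean norm. Computability notions: a sequence $(r_k)_{k\in\mathbb{N}}\subset\mathbb{Q}$ is computable if $r_k=(-1)^{s(k)}a(k)/b(k)$ for recursive functions $a,b,s:\mathbb{N}\to\mathbb{N}$ with $b(k)\neq 0$ (analogously for multi-indexed sequences). A real number $x$ is computable if there is a computable sequence of rationals $(r_k)$ with $|r_k-x|\le 2^{-k}$ for all $k$; $\mathbb{R}_c$ denotes the computable reals. A sequence $(x_n)_{n}\subset\mathbb{R}$ is computable if there is a computable double sequence $(r_{n,k})\subset\mathbb{Q}$ with $|r_{n,k}-x_n|\le 2^{-k}$ for all $n,k$. Complex numbers, vectors, matrices (and sequences of these) are computable if all real and imaginary parts of all entries are computable (as sequences). A function $f$ defined on computable inputs (real/complex vectors, matrices, or matrix–vector pairs with computable entries) is Banach-Mazur computable if it maps every computable sequence of inputs in its domain to a computable sequence of outputs; for complex-valued functions this is required of the real and imaginary parts. *)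

theory Defs
  imports "HOL-Analysis.Analysis"
begin

datatype recf = Zero | Succ | Proj nat | Comp recf "recf list" | Prim recf recf | Mn recf

inductive eval :: "recf \<Rightarrow> nat list \<Rightarrow> nat \<Rightarrow> bool" where
  eval_Zero: "eval Zero xs 0"
| eval_Succ: "eval Succ (x # xs) (Suc x)"
| eval_Proj: "i < length xs \<Longrightarrow> eval (Proj i) xs (xs ! i)"
| eval_Comp: "list_all2 (\<lambda>g y. eval g xs y) gs ys \<Longrightarrow> eval f ys z \<Longrightarrow> eval (Comp f gs) xs z"
| eval_Prim0: "eval f xs y \<Longrightarrow> eval (Prim f g) (0 # xs) y"
| eval_PrimS: "eval (Prim f g) (n # xs) y \<Longrightarrow> eval g (y # n # xs) z \<Longrightarrow>
     eval (Prim f g) (Suc n # xs) z"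
| eval_Mn: "eval f (n # xs) 0 \<Longrightarrow> (\<forall>k<n. \<exists>y. eval f (k # xs) y \<and> 0 < y) \<Longrightarrow>
     eval (Mn f) xs n"

definition recursive2 :: "(nat \<Rightarrow> nat \<Rightarrow> nat) \<Rightarrow> bool" where
  "recursive2 f \<longleftrightarrow> (\<exists>r. \<forall>n k. eval r [n, k] (f n k))"

definition computable_rat_seq2 :: "(nat \<Rightarrow> nat \<Rightarrow> rat) \<Rightarrow> bool" where
  "computable_rat_seq2 q \<longleftrightarrow> (\<exists>a b s. recursive2 a \<and> recursive2 b \<and> recursive2 s \<and>
     (\<forall>n k. b n k \<noteq> 0 \<and> q n k = (-1) ^ (s n k) * of_nat (a n k) / of_nat (b n k)))"

definition computable_real_seq :: "(nat \<Rightarrow> real) \<Rightarrow> bool" where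
  "computable_real_seq x \<longleftrightarrow> (\<exists>q. computable_rat_seq2 q \<and>
     (\<forall>n k. \<bar>real_of_rat (q n k) - x n\<bar> \<le> 1 / 2 ^ k))"

definition computable_complex_seq :: "(nat \<Rightarrow> complex) \<Rightarrow> bool" where
  "computable_complex_seq z \<longleftrightarrow>
     computable_real_seq (\<lambda>k. Re (z k)) \<and> computable_real_seq (\<lambda>k. Im (z k))"

definition computable_cvec_seq :: "(nat \<Rightarrow> complex ^ 'n) \<Rightarrow> bool" where
  "computable_cvec_seq v \<longleftrightarrow> (\<forall>i. computable_complex_seq (\<lambda>k. v k $ i))"

definition computable_cmat_seq :: "(nat \<Rightarrow> complex ^ 'n ^ 'm) \<Rightarrow> bool" where
  "computable_cmat_seq A \<longleftrightarrow> (\<forall>i j. computable_complex_seq (\<lambda>k. A k $ i $ j))"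

definition computable_pair_seq :: "(nat \<Rightarrow> (complex ^ 'n ^ 'm) \<times> (complex ^ 'm)) \<Rightarrow> bool" where
  "computable_pair_seq s \<longleftrightarrow> computable_cmat_seq (\<lambda>k. fst (s k)) \<and> computable_cvec_seq (\<lambda>k. snd (s k))"

definition banach_mazur_computable ::
    "((nat \<Rightarrow> 'a) \<Rightarrow> bool) \<Rightarrow> ((nat \<Rightarrow> 'b) \<Rightarrow> bool) \<Rightarrow> ('a \<Rightarrow> 'b) \<Rightarrow> bool" where
  "banach_mazur_computable P Q f \<longleftrightarrow> (\<forall>s. P s \<longrightarrow> Q (\<lambda>k. f (s k)))"

definition adjoint_cmat :: "complex ^ 'n ^ 'm \<Rightarrow> complex ^ 'm ^ 'n" where
  "adjoint_cmat A = (\<chi> i j. cnj (A $ j $ i))"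

definition penrose :: "complex ^ 'n ^ 'm \<Rightarrow> complex ^ 'm ^ 'n \<Rightarrow> bool" where
  "penrose A X \<longleftrightarrow> A ** X ** A = A \<and> X ** A ** X = X \<and>
     adjoint_cmat (A ** X) = A ** X \<and> adjoint_cmat (X ** A) = X ** A"

definition pinv :: "complex ^ 'n ^ 'm \<Rightarrow> complex ^ 'm ^ 'n" where
  "pinv A = (THE X. penrose A X)"

definition frob_norm :: "complex ^ 'n ^ 'm \<Rightarrow> real" where
  "frob_norm A = sqrt (\<Sum>i\<in>UNIV. \<Sum>j\<in>UNIV. (cmod (A $ i $ j))\<^sup>2)"

definition lsq_value :: "complex ^ 'n ^ 'm \<Rightarrow> complex ^ 'm \<Rightarrow> real" where
  "lsq_value A b = Inf (range (\<lambda>x. norm (A *v x - b)))"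

definition lsq_solution :: "complex ^ 'n ^ 'm \<Rightarrow> complex ^ 'm \<Rightarrow> complex ^ 'n" where
  "lsq_solution A b = pinv A *v b"

end

theory Submission
  imports Defs "HOL-Library.Nat_Bijection"
begin



inductive_cases evalZeroE: "eval Zero xs y"
inductive_cases evalSuccE: "eval Succ xs y"
inductive_cases evalProjE: "eval (Proj i) xs y"
inductive_cases evalCompE: "eval (Comp f gs) xs y"
inductive_cases evalPrimE: "eval (Prim f g) xs y"
inductive_cases evalMnE: "eval (Mn f) xs y"

lemma eval_fun: "eval r xs y \<Longrightarrow> eval r xs y' \<Longrightarrow> y = y'"
proof (induction r xs y arbitrary: y' rule: eval.induct)
  case (eval_Zero xs) then show ?case by (blast elim: evalZeroE)
next
  case (eval_Succ x xs) then show ?case by (blast elim: evalSuccE)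
next
  case (eval_Proj i xs) then show ?case by (blast elim: evalProjE)
next
  case (eval_Comp xs gs ys f z)
  from eval_Comp.prems obtain ys' where a: "list_all2 (\<lambda>g. eval g xs) gs ys'" and b: "eval f ys' y'"
    by (blast elim: evalCompE)
  have "ys = ys'" using eval_Comp(1) a
  proof (induction gs ys arbitrary: ys' rule: list_all2_induct)
    case Nil then show ?case by simp
  next
    case (Cons g gs y ys)
    then obtain y1 ys1 where "ys' = y1 # ys1" "eval g xs y1" "list_all2 (\<lambda>g. eval g xs) gs ys1"
      by (cases ys') auto
    then show ?case using Cons by auto
  qed
  then show ?case using eval_Comp.IH b by auto
next
  case (eval_Prim0 f xs y g)
  from eval_Prim0.prems show ?case
    by (rule evalPrimE) (use eval_Prim0.IH in auto)
next
  case (eval_PrimS f g n xs y z)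
  from eval_PrimS.prems show ?case
    by (rule evalPrimE) (use eval_PrimS.IH in auto)
next
  case (eval_Mn f n xs)
  from eval_Mn.prems obtain n' where n': "y' = n'" "eval f (n' # xs) 0" "\<forall>k<n'. \<exists>y. eval f (k # xs) y \<and> 0 < y"
    by (blast elim: evalMnE)
  show ?case
  proof (rule ccontr)
    assume "n \<noteq> y'"
    then consider "n < n'" | "n' < n" using n' by linarith
    then show False
    proof cases
      case 1
      then obtain y where "eval f (n # xs) y" "0 < y" using n' by auto
      then show False using eval_Mn.IH(1) by fastforce
    next
      case 2
      then obtain y where "eval f (n' # xs) y" "\<forall>y'. eval f (n' # xs) y' \<longrightarrow> y = y'" "0 < y"
        using eval_Mn.IH(2) by blast
      then show False using n' by fastforce
    qed
  qed
qed

definition cn :: "nat \<Rightarrow> (nat list \<Rightarrow> nat) \<Rightarrow> bool" where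
  "cn n f \<longleftrightarrow> (\<exists>r. \<forall>xs. length xs = n \<longrightarrow> eval r xs (f xs))"

definition cp :: "nat \<Rightarrow> (nat list \<Rightarrow> bool) \<Rightarrow> bool" where
  "cp n P \<longleftrightarrow> cn n (\<lambda>xs. if P xs then 1 else 0)"

lemma cn_ext: "cn n f \<Longrightarrow> (\<And>xs. length xs = n \<Longrightarrow> f xs = g xs) \<Longrightarrow> cn n g"
  unfolding cn_def by metis

lemma cp_ext: "cp n P \<Longrightarrow> (\<And>xs. length xs = n \<Longrightarrow> P xs = Q xs) \<Longrightarrow> cp n Q"
  unfolding cp_def by (erule cn_ext) auto

lemma cn_const: "cn n (\<lambda>xs. c)"
proof (induction c)
  case 0
  have "eval (Comp Zero []) xs 0" for xs
    by (rule eval_Comp[where ys="[]"]) (auto intro: eval_Zero)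
  then show ?case unfolding cn_def by blast
next
  case (Suc c)
  then obtain r where r: "\<forall>xs. length xs = n \<longrightarrow> eval r xs c" unfolding cn_def by blast
  have "eval (Comp Succ [r]) xs (Suc c)" if "length xs = n" for xs
    by (rule eval_Comp[where ys="[c]"]) (auto intro: eval_Succ simp: r that)
  then show ?case unfolding cn_def by blast
qed

lemma cn_proj: "i < n \<Longrightarrow> cn n (\<lambda>xs. xs ! i)"
  unfolding cn_def by (auto intro: eval_Proj)

lemma cn_compL:
  assumes "cn (length Fs) f" "\<forall>F\<in>set Fs. cn n F"
  shows "cn n (\<lambda>xs. f (map (\<lambda>F. F xs) Fs))"
proof -
  have "\<exists>rs. \<forall>xs. length xs = n \<longrightarrow> list_all2 (\<lambda>r y. eval r xs y) rs (map (\<lambda>F. F xs) Fs)"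
    using assms(2)
  proof (induction Fs)
    case Nil then show ?case by auto
  next
    case (Cons F Fs)
    then obtain rs where rs: "\<forall>xs. length xs = n \<longrightarrow> list_all2 (\<lambda>r y. eval r xs y) rs (map (\<lambda>F. F xs) Fs)"
      by auto
    from Cons.prems obtain r where "\<forall>xs. length xs = n \<longrightarrow> eval r xs (F xs)" unfolding cn_def by auto
    then show ?case using rs by (intro exI[of _ "r # rs"]) auto
  qed
  then obtain rs where rs: "\<forall>xs. length xs = n \<longrightarrow> list_all2 (\<lambda>r y. eval r xs y) rs (map (\<lambda>F. F xs) Fs)"
    by blast
  from assms(1) obtain rf where rf: "\<forall>ys. length ys = length Fs \<longrightarrow> eval rf ys (f ys)"
    unfolding cn_def by blast
  have "eval (Comp rf rs) xs (f (map (\<lambda>F. F xs) Fs))" if "length xs = n" for xs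
    by (rule eval_Comp[where ys="map (\<lambda>F. F xs) Fs"]) (use rs rf that in auto)
  then show ?thesis unfolding cn_def by blast
qed

primrec PR :: "(nat list \<Rightarrow> nat) \<Rightarrow> (nat list \<Rightarrow> nat) \<Rightarrow> nat \<Rightarrow> nat list \<Rightarrow> nat" where
  "PR f g 0 ys = f ys"
| "PR f g (Suc k) ys = g (PR f g k ys # k # ys)"

lemma cn_PR:
  assumes "cn n f" "cn (Suc (Suc n)) g"
  shows "cn (Suc n) (\<lambda>xs. PR f g (hd xs) (tl xs))"
proof -
  obtain rf where rf: "\<forall>ys. length ys = n \<longrightarrow> eval rf ys (f ys)" using assms(1) unfolding cn_def by blast
  obtain rg where rg: "\<forall>ys. length ys = Suc (Suc n) \<longrightarrow> eval rg ys (g ys)" using assms(2) unfolding cn_def by blast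
  have *: "eval (Prim rf rg) (k # ys) (PR f g k ys)" if "length ys = n" for k ys
  proof (induction k)
    case 0 then show ?case using rf that by (auto intro: eval_Prim0)
  next
    case (Suc k) then show ?case using rg that by (auto intro: eval_PrimS)
  qed
  show ?thesis unfolding cn_def
  proof (intro exI allI impI)
    fix xs :: "nat list" assume "length xs = Suc n"
    then obtain k ys where "xs = k # ys" "length ys = n" by (cases xs) auto
    then show "eval (Prim rf rg) xs (PR f g (hd xs) (tl xs))" using * by simp
  qed
qed

lemma cn_subst:
  assumes "cn (Suc n) F" "cn n B"
  shows "cn n (\<lambda>xs. F (B xs # xs))"
proof -
  let ?Fs = "B # map (\<lambda>i xs. xs ! i) [0..<n]"
  have "cn n (\<lambda>xs. F (map (\<lambda>G. G xs) ?Fs))"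
    by (rule cn_compL) (use assms in \<open>auto intro: cn_proj\<close>)
  then show ?thesis
  proof (rule cn_ext)
    fix xs :: "nat list" assume "length xs = n"
    then have "map (\<lambda>i. xs ! i) [0..<n] = xs"
      by (metis map_nth)
    then show "F (map (\<lambda>G. G xs) ?Fs) = F (B xs # xs)" by (simp add: comp_def)
  qed
qed

lemma cn_tl:
  assumes "cn n F"
  shows "cn (Suc n) (\<lambda>xs. F (tl xs))"
proof -
  let ?Fs = "map (\<lambda>i xs. xs ! Suc i) [0..<n]"
  have "cn (Suc n) (\<lambda>xs. F (map (\<lambda>G. G xs) ?Fs))"
    by (rule cn_compL) (use assms in \<open>auto intro: cn_proj\<close>)
  then show ?thesis
  proof (rule cn_ext)
    fix xs :: "nat list" assume "length xs = Suc n"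
    then have "map (\<lambda>i. xs ! Suc i) [0..<n] = tl xs"
      by (cases xs) (auto simp: map_nth[unfolded comp_def])
    then show "F (map (\<lambda>G. G xs) ?Fs) = F (tl xs)" by (simp add: comp_def)
  qed
qed

lemma cn_comp2:
  assumes "cn 2 (\<lambda>xs. f (xs ! 0) (xs ! 1))" "cn n F" "cn n G"
  shows "cn n (\<lambda>xs. f (F xs) (G xs))"
proof -
  have "cn n (\<lambda>xs. (\<lambda>ys. f (ys ! 0) (ys ! 1)) (map (\<lambda>H. H xs) [F, G]))"
    by (rule cn_compL) (use assms in \<open>auto simp: numeral_2_eq_2\<close>)
  then show ?thesis by simp
qed

lemma cn_comp1:
  assumes "cn 1 (\<lambda>xs. f (xs ! 0))" "cn n F"
  shows "cn n (\<lambda>xs. f (F xs))"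
proof -
  have "cn n (\<lambda>xs. (\<lambda>ys. f (ys ! 0)) (map (\<lambda>H. H xs) [F]))"
    by (rule cn_compL) (use assms in auto)
  then show ?thesis by simp
qed

lemma cn_Suc0: "cn 1 (\<lambda>xs. Suc (xs ! 0))"
proof -
  have "eval Succ xs (Suc (xs ! 0))" if "length xs = 1" for xs
    using that by (cases xs) (auto intro: eval_Succ)
  then show ?thesis unfolding cn_def by blast
qed

lemma cn_Suc: "cn n F \<Longrightarrow> cn n (\<lambda>xs. Suc (F xs))"
  by (rule cn_comp1[OF cn_Suc0])

lemma cn_add0: "cn 2 (\<lambda>xs. xs ! 0 + xs ! 1)"
proof -
  have "cn (Suc 1) (\<lambda>xs. PR (\<lambda>ys. ys ! 0) (\<lambda>zs. Suc (zs ! 0)) (hd xs) (tl xs))"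
    by (rule cn_PR) (rule cn_proj, simp, rule cn_Suc, rule cn_proj, simp)
  moreover have "PR (\<lambda>ys. ys ! 0) (\<lambda>zs. Suc (zs ! 0)) k ys = k + ys ! 0" for k ys
    by (induction k) auto
  ultimately have "cn 2 (\<lambda>xs. PR (\<lambda>ys. ys ! 0) (\<lambda>zs. Suc (zs ! 0)) (hd xs) (tl xs))"
    by (simp add: numeral_2_eq_2)
  then show ?thesis
  proof (rule cn_ext)
    fix xs :: "nat list" assume "length xs = 2"
    then obtain a b where "xs = [a, b]" by (auto simp: numeral_2_eq_2 length_Suc_conv)
    then show "PR (\<lambda>ys. ys ! 0) (\<lambda>zs. Suc (zs ! 0)) (hd xs) (tl xs) = xs ! 0 + xs ! 1"
      using \<open>\<And>k ys. PR _ _ k ys = k + ys ! 0\<close> by simp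
  qed
qed

lemma cn_add: "cn n F \<Longrightarrow> cn n G \<Longrightarrow> cn n (\<lambda>xs. F xs + G xs)"
  by (rule cn_comp2[OF cn_add0])




lemma cn_reidx:
  assumes "cn m f" "\<forall>i<m. idx i < n"
  shows "cn n (\<lambda>xs. f (map (\<lambda>i. xs ! idx i) [0..<m]))"
proof -
  have "cn n (\<lambda>xs. f (map (\<lambda>G. G xs) (map (\<lambda>i xs. xs ! idx i) [0..<m])))"
    by (rule cn_compL) (use assms in \<open>auto intro: cn_proj\<close>)
  then show ?thesis by (simp add: comp_def)
qed

lemma cn_proj_tl: "Suc i < n \<Longrightarrow> cn n (\<lambda>xs. tl xs ! i)"
  by (rule cn_ext[OF cn_proj[of "Suc i"]]) (auto simp: nth_tl)

lemma cn_proj_tl2: "Suc (Suc i) < n \<Longrightarrow> cn n (\<lambda>xs. tl (tl xs) ! i)"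
  by (rule cn_ext[OF cn_proj[of "Suc (Suc i)"]]) (auto simp: nth_tl)

lemma cn_proj_tl3: "Suc (Suc (Suc i)) < n \<Longrightarrow> cn n (\<lambda>xs. tl (tl (tl xs)) ! i)"
  by (rule cn_ext[OF cn_proj[of "Suc (Suc (Suc i))"]]) (auto simp: nth_tl)

lemma cn_proj_tl4: "Suc (Suc (Suc (Suc i))) < n \<Longrightarrow> cn n (\<lambda>xs. tl (tl (tl (tl xs))) ! i)"
  by (rule cn_ext[OF cn_proj[of "Suc (Suc (Suc (Suc i)))"]]) (auto simp: nth_tl)

lemma len2: "length xs = 2 \<Longrightarrow> \<exists>a b. xs = [a, b]"
  by (auto simp: numeral_2_eq_2 length_Suc_conv)

lemma cn_PR2:
  assumes "cn 1 f" "cn 3 g" "\<And>k y. PR f g k [y] = h k y"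
  shows "cn 2 (\<lambda>xs. h (xs ! 0) (xs ! 1))"
proof -
  have "cn (Suc 1) (\<lambda>xs. PR f g (hd xs) (tl xs))"
    by (rule cn_PR) (use assms in \<open>simp_all add: numeral_3_eq_3\<close>)
  then have "cn 2 (\<lambda>xs. PR f g (hd xs) (tl xs))" by (simp add: numeral_2_eq_2)
  then show ?thesis by (rule cn_ext) (use assms(3) in \<open>auto dest!: len2\<close>)
qed

lemma cn_swap2: "cn 2 (\<lambda>xs. h (xs ! 0) (xs ! 1)) \<Longrightarrow> cn 2 (\<lambda>xs. h (xs ! 1) (xs ! 0))"
  by (rule cn_comp2) (auto intro: cn_proj)

lemma cn_mult0: "cn 2 (\<lambda>xs. xs ! 0 * xs ! 1)"
proof (rule cn_PR2[where f="\<lambda>_. 0" and g="\<lambda>zs. zs ! 0 + zs ! 2"])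
  show "cn 1 (\<lambda>_. 0)" by (rule cn_const)
  show "cn 3 (\<lambda>zs. zs ! 0 + zs ! 2)" by (intro cn_add cn_proj) auto
  show "PR (\<lambda>_. 0) (\<lambda>zs. zs ! 0 + zs ! 2) k [y] = k * y" for k y by (induction k) auto
qed

lemma cn_mult: "cn n F \<Longrightarrow> cn n G \<Longrightarrow> cn n (\<lambda>xs. F xs * G xs)"
  by (rule cn_comp2[OF cn_mult0])

lemma cn_monus0: "cn 2 (\<lambda>xs. xs ! 1 - xs ! 0)"
proof (rule cn_PR2[where f="\<lambda>ys. ys ! 0" and g="\<lambda>zs. zs ! 0 - 1"])
  show "cn 1 (\<lambda>ys. ys ! 0)" by (rule cn_proj) auto
  have "cn (Suc 0) (\<lambda>xs. PR (\<lambda>_. 0) (\<lambda>zs. zs ! 1) (hd xs) (tl xs))"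
    by (rule cn_PR) (auto intro: cn_const cn_proj)
  then have "cn 1 (\<lambda>xs. PR (\<lambda>_. 0) (\<lambda>zs. zs ! 1) (hd xs) (tl xs))" by simp
  then have "cn 1 (\<lambda>xs. xs ! 0 - 1)"
  proof (rule cn_ext)
    fix xs :: "nat list" assume "length xs = 1"
    then obtain a where "xs = [a]" by (auto simp: length_Suc_conv)
    then show "PR (\<lambda>_. 0) (\<lambda>zs. zs ! 1) (hd xs) (tl xs) = xs ! 0 - 1" by (cases a) auto
  qed
  then show "cn 3 (\<lambda>zs. zs ! 0 - 1)" by (rule cn_comp1) (auto intro: cn_proj)
  show "PR (\<lambda>ys. ys ! 0) (\<lambda>zs. zs ! 0 - 1) k [y] = y - k" for k y by (induction k) auto
qed

lemma cn_monus: "cn n F \<Longrightarrow> cn n G \<Longrightarrow> cn n (\<lambda>xs. F xs - G xs)"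
  by (rule cn_comp2[OF cn_swap2[OF cn_monus0]])

lemma cn_pow0: "cn 2 (\<lambda>xs. xs ! 1 ^ xs ! 0)"
proof (rule cn_PR2[where f="\<lambda>_. 1" and g="\<lambda>zs. zs ! 0 * zs ! 2"])
  show "cn 1 (\<lambda>_. 1)" by (rule cn_const)
  show "cn 3 (\<lambda>zs. zs ! 0 * zs ! 2)" by (intro cn_mult cn_proj) auto
  show "PR (\<lambda>_. 1) (\<lambda>zs. zs ! 0 * zs ! 2) k [y] = y ^ k" for k y by (induction k) auto
qed

lemma cn_pow: "cn n F \<Longrightarrow> cn n G \<Longrightarrow> cn n (\<lambda>xs. F xs ^ G xs)"
  by (rule cn_comp2[OF cn_swap2[OF cn_pow0]])

lemma cp_eq: "cn n F \<Longrightarrow> cn n G \<Longrightarrow> cp n (\<lambda>xs. F xs = G xs)"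
  unfolding cp_def
  apply (rule cn_ext[where f="\<lambda>xs. 1 - ((F xs - G xs) + (G xs - F xs))"])
  apply ((intro cn_monus cn_add cn_const); assumption)
  by auto

lemma cp_less: "cn n F \<Longrightarrow> cn n G \<Longrightarrow> cp n (\<lambda>xs. F xs < G xs)"
  unfolding cp_def
  apply (rule cn_ext[where f="\<lambda>xs. 1 - (1 - (G xs - F xs))"])
  apply ((intro cn_monus cn_const); assumption)
  by auto

lemma cp_le: "cn n F \<Longrightarrow> cn n G \<Longrightarrow> cp n (\<lambda>xs. F xs \<le> G xs)"
  apply (rule cp_ext[where P="\<lambda>xs. F xs < Suc (G xs)"])
  apply ((intro cp_less cn_Suc); assumption)
  by auto

lemma cp_not: "cp n P \<Longrightarrow> cp n (\<lambda>xs. \<not> P xs)"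
  unfolding cp_def
  apply (rule cn_ext[where f="\<lambda>xs. 1 - (if P xs then 1 else 0)"])
  apply ((intro cn_monus cn_const); assumption)
  by auto

lemma cp_conj: "cp n P \<Longrightarrow> cp n Q \<Longrightarrow> cp n (\<lambda>xs. P xs \<and> Q xs)"
  unfolding cp_def
  apply (rule cn_ext[where f="\<lambda>xs. (if P xs then 1 else 0) * (if Q xs then 1 else 0)"])
  apply ((intro cn_mult); assumption)
  by auto

lemma cp_disj: "cp n P \<Longrightarrow> cp n Q \<Longrightarrow> cp n (\<lambda>xs. P xs \<or> Q xs)"
  apply (rule cp_ext[where P="\<lambda>xs. \<not> (\<not> P xs \<and> \<not> Q xs)"])
  apply ((intro cp_not cp_conj); assumption)
  by auto

lemma cp_imp: "cp n P \<Longrightarrow> cp n Q \<Longrightarrow> cp n (\<lambda>xs. P xs \<longrightarrow> Q xs)"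
  apply (rule cp_ext[where P="\<lambda>xs. \<not> P xs \<or> Q xs"])
  apply ((intro cp_not cp_disj); assumption)
  by auto

lemma cn_if: "cp n P \<Longrightarrow> cn n F \<Longrightarrow> cn n G \<Longrightarrow> cn n (\<lambda>xs. if P xs then F xs else G xs)"
  unfolding cp_def
  apply (rule cn_ext[where f="\<lambda>xs. (if P xs then 1 else 0) * F xs + (1 - (if P xs then 1 else 0)) * G xs"])
  apply ((intro cn_add cn_mult cn_monus cn_const); assumption)
  by auto

lemma cn_of_cp: "cp n P \<Longrightarrow> cn n (\<lambda>xs. if P xs then 1 else 0)"
  unfolding cp_def .

lemma cp_ball:
  assumes "cp (Suc n) (\<lambda>ys. P (ys ! 0) (tl ys))" "cn n B"
  shows "cp n (\<lambda>xs. \<forall>k<B xs. P k xs)"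
proof -
  let ?Q = "\<lambda>ys. if P (ys ! 0) (tl ys) then 1 else (0::nat)"
  let ?g = "\<lambda>zs. zs ! 0 * ?Q (tl zs)"
  have "cn (Suc n) (\<lambda>xs. PR (\<lambda>_. 1) ?g (hd xs) (tl xs))"
  proof (rule cn_PR)
    show "cn n (\<lambda>_. 1)" by (rule cn_const)
    show "cn (Suc (Suc n)) ?g"
      by (intro cn_mult cn_proj) (auto intro: cn_tl assms(1)[unfolded cp_def])
  qed
  from cn_subst[OF this assms(2)]
  have "cn n (\<lambda>xs. PR (\<lambda>_. 1) ?g (B xs) xs)" by simp
  moreover have "PR (\<lambda>_. 1) ?g k xs = (if \<forall>j<k. P j xs then 1 else 0)" for k xs
    by (induction k) (auto simp: less_Suc_eq)
  ultimately show ?thesis unfolding cp_def by simp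
qed

lemma cp_bex:
  assumes "cp (Suc n) (\<lambda>ys. P (ys ! 0) (tl ys))" "cn n B"
  shows "cp n (\<lambda>xs. \<exists>k<B xs. P k xs)"
proof -
  have "cp n (\<lambda>xs. \<not> (\<forall>k<B xs. \<not> P k xs))"
    by (intro cp_not cp_ball[where P="\<lambda>k xs. \<not> P k xs"] cp_not assms)
  then show ?thesis by simp
qed

definition bmin :: "nat \<Rightarrow> (nat \<Rightarrow> bool) \<Rightarrow> nat" where
  "bmin b P = (if \<exists>k<b. P k then (LEAST k. P k) else b)"

lemma bmin_Suc: "bmin (Suc b) P = (if bmin b P < b then bmin b P else if P b then b else Suc b)"
proof (cases "\<exists>k<b. P k")
  case True
  then obtain k where k: "k < b" "P k" by auto
  have "(LEAST k. P k) \<le> k" using k by (intro Least_le) 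
  then show ?thesis using True k unfolding bmin_def by (auto simp: less_Suc_eq)
next
  case False
  then show ?thesis unfolding bmin_def
    by (auto simp: less_Suc_eq intro!: Least_equality) (meson not_le)
qed

lemma bmin_le: "bmin b P \<le> b"
  unfolding bmin_def by (auto intro: Least_le order.trans[OF Least_le] less_imp_le)

lemma cn_bmin:
  assumes "cp (Suc n) (\<lambda>ys. P (ys ! 0) (tl ys))" "cn n B"
  shows "cn n (\<lambda>xs. bmin (B xs) (\<lambda>k. P k xs))"
proof -
  let ?g = "\<lambda>zs. if zs ! 0 < zs ! 1 then zs ! 0 else if P (zs ! 1) (tl (tl zs)) then zs ! 1 else Suc (zs ! 1)"
  have P2: "cp (Suc (Suc n)) (\<lambda>zs. P (zs ! 1) (tl (tl zs)))"
    using cn_tl[OF assms(1)[unfolded cp_def]] unfolding cp_def by (rule cn_ext) (simp add: nth_tl)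
  have "cn (Suc n) (\<lambda>xs. PR (\<lambda>_. 0) ?g (hd xs) (tl xs))"
  proof (rule cn_PR)
    show "cn n (\<lambda>_. 0)" by (rule cn_const)
    show "cn (Suc (Suc n)) ?g"
      by (intro cn_if cp_less cn_proj cn_Suc P2) auto
  qed
  from cn_subst[OF this assms(2)]
  have "cn n (\<lambda>xs. PR (\<lambda>_. 0) ?g (B xs) xs)" by simp
  moreover have "PR (\<lambda>_. 0) ?g k xs = bmin k (\<lambda>k. P k xs)" for k xs
    by (induction k) (simp_all add: bmin_Suc bmin_def[of 0])
  ultimately show ?thesis by simp
qed

lemma cn_iter:
  assumes "cn (Suc n) (\<lambda>ys. F (ys ! 0) (tl ys))" "cn n B" "cn n X"
  shows "cn n (\<lambda>xs. ((\<lambda>v. F v xs) ^^ B xs) (X xs))"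
proof -
  let ?g = "\<lambda>zs. F (zs ! 0) (tl (tl zs))"
  have G: "cn (Suc (Suc n)) ?g"
  proof -
    have "cn (Suc (Suc n)) (\<lambda>zs. (\<lambda>ys. F (ys ! 0) (tl ys)) (map (\<lambda>i. zs ! (if i = 0 then 0 else Suc i)) [0..<Suc n]))"
      by (rule cn_reidx[OF assms(1)]) auto
    then show ?thesis
    proof (rule cn_ext)
      fix zs :: "nat list" assume l: "length zs = Suc (Suc n)"
      have "tl (map (\<lambda>i. zs ! (if i = 0 then 0 else Suc i)) [0..<Suc n]) = tl (tl zs)"
        using l by (auto simp del: upt_Suc simp: nth_tl intro!: nth_equalityI)
      then show "(\<lambda>ys. F (ys ! 0) (tl ys)) (map (\<lambda>i. zs ! (if i = 0 then 0 else Suc i)) [0..<Suc n]) = ?g zs"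
        by (simp del: upt_Suc add: nth_Cons' upt_conv_Cons)
    qed
  qed
  have "cn (Suc n) (\<lambda>xs. PR X ?g (hd xs) (tl xs))"
    by (rule cn_PR[OF assms(3) G])
  from cn_subst[OF this assms(2)]
  have "cn n (\<lambda>xs. PR X ?g (B xs) xs)" by simp
  moreover have "PR X ?g k xs = ((\<lambda>v. F v xs) ^^ k) (X xs)" for k xs
    by (induction k) auto
  ultimately show ?thesis by simp
qed




lemmas cnI = cn_const cn_proj cn_proj_tl cn_proj_tl2 cn_proj_tl3 cn_proj_tl4 cn_Suc cn_add cn_mult cn_monus cn_pow
  cp_eq cp_less cp_le cp_not cp_conj cp_disj cp_imp cn_if cn_of_cp cp_ball cp_bex cn_bmin

lemma cn_triangle0: "cn 1 (\<lambda>xs. triangle (xs ! 0))"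
proof -
  have "cn (Suc 0) (\<lambda>xs. PR (\<lambda>_. 0) (\<lambda>zs. zs ! 0 + Suc (zs ! 1)) (hd xs) (tl xs))"
    by (rule cn_PR) (intro cnI; simp)+
  moreover have "PR (\<lambda>_. 0) (\<lambda>zs. zs ! 0 + Suc (zs ! 1)) k ys = triangle k" for k ys
    by (induction k) auto
  ultimately have "cn 1 (\<lambda>xs. triangle (hd xs))" by simp
  then show ?thesis by (rule cn_ext) (auto simp: length_Suc_conv)
qed

lemma cn_triangle: "cn n F \<Longrightarrow> cn n (\<lambda>xs. triangle (F xs))"
  by (rule cn_comp1[OF cn_triangle0])

lemma cn_pe: "cn n F \<Longrightarrow> cn n G \<Longrightarrow> cn n (\<lambda>xs. prod_encode (F xs, G xs))"
  unfolding prod_encode_def by (simp, intro cn_add cn_triangle)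

definition pfst :: "nat \<Rightarrow> nat" where "pfst c = fst (prod_decode c)"
definition psnd :: "nat \<Rightarrow> nat" where "psnd c = snd (prod_decode c)"

lemma pfst_pe[simp]: "pfst (prod_encode (a, b)) = a" by (simp add: pfst_def)
lemma psnd_pe[simp]: "psnd (prod_encode (a, b)) = b" by (simp add: psnd_def)
lemma pe_pfst_psnd[simp]: "prod_encode (pfst c, psnd c) = c" by (simp add: pfst_def psnd_def)

lemma pfst_bmin: "pfst c = bmin (Suc c) (\<lambda>a. \<exists>b<Suc c. prod_encode (a, b) = c)"
proof -
  obtain a0 b0 where d: "prod_decode c = (a0, b0)" by (cases "prod_decode c")
  then have c: "c = prod_encode (a0, b0)" by (metis prod_decode_inverse)
  have le: "a0 \<le> c" "b0 \<le> c" using c le_prod_encode_1 le_prod_encode_2 by auto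
  have "(LEAST a. \<exists>b<Suc c. prod_encode (a, b) = c) = a0"
    by (rule Least_equality) (use c le in auto)
  then show ?thesis unfolding bmin_def pfst_def using d le c by auto
qed

lemma psnd_bmin: "psnd c = bmin (Suc c) (\<lambda>b. \<exists>a<Suc c. prod_encode (a, b) = c)"
proof -
  obtain a0 b0 where d: "prod_decode c = (a0, b0)" by (cases "prod_decode c")
  then have c: "c = prod_encode (a0, b0)" by (metis prod_decode_inverse)
  have le: "a0 \<le> c" "b0 \<le> c" using c le_prod_encode_1 le_prod_encode_2 by auto
  have "(LEAST b. \<exists>a<Suc c. prod_encode (a, b) = c) = b0"
    by (rule Least_equality) (use c le in auto)
  then show ?thesis unfolding bmin_def psnd_def using d le c by auto
qed

lemma cn_pfst0: "cn 1 (\<lambda>xs. pfst (xs ! 0))"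
proof -
  have "cn 1 (\<lambda>xs. bmin (Suc (xs ! 0)) (\<lambda>a. \<exists>b<Suc (xs ! 0). prod_encode (a, b) = xs ! 0))"
    by (intro cnI cn_pe; simp)
  then show ?thesis by (simp add: pfst_bmin)
qed

lemma cn_psnd0: "cn 1 (\<lambda>xs. psnd (xs ! 0))"
proof -
  have "cn 1 (\<lambda>xs. bmin (Suc (xs ! 0)) (\<lambda>b. \<exists>a<Suc (xs ! 0). prod_encode (a, b) = xs ! 0))"
    by (intro cnI cn_pe; simp)
  then show ?thesis by (simp add: psnd_bmin)
qed

lemma cn_pfst: "cn n F \<Longrightarrow> cn n (\<lambda>xs. pfst (F xs))" by (rule cn_comp1[OF cn_pfst0])
lemma cn_psnd: "cn n F \<Longrightarrow> cn n (\<lambda>xs. psnd (F xs))" by (rule cn_comp1[OF cn_psnd0])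

definition lhd :: "nat \<Rightarrow> nat" where "lhd c = pfst (c - 1)"
definition ltl :: "nat \<Rightarrow> nat" where "ltl c = psnd (c - 1)"
definition lnth :: "nat \<Rightarrow> nat \<Rightarrow> nat" where "lnth c i = lhd ((ltl ^^ i) c)"
definition llen :: "nat \<Rightarrow> nat" where "llen c = bmin (Suc c) (\<lambda>i. (ltl ^^ i) c = 0)"
definition lcons :: "nat \<Rightarrow> nat \<Rightarrow> nat" where "lcons a b = Suc (prod_encode (a, b))"

lemma cn_lhd: "cn n F \<Longrightarrow> cn n (\<lambda>xs. lhd (F xs))"
  unfolding lhd_def by (intro cn_pfst cnI)
lemma cn_ltl: "cn n F \<Longrightarrow> cn n (\<lambda>xs. ltl (F xs))"
  unfolding ltl_def by (intro cn_psnd cnI)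
lemma cn_lcons: "cn n F \<Longrightarrow> cn n G \<Longrightarrow> cn n (\<lambda>xs. lcons (F xs) (G xs))"
  unfolding lcons_def by (intro cn_Suc cn_pe)

lemma cn_ltlpow: "cn n I \<Longrightarrow> cn n C \<Longrightarrow> cn n (\<lambda>xs. (ltl ^^ I xs) (C xs))"
  using cn_iter[where F="\<lambda>v xs. ltl v" and B=I and X=C] by (simp add: cn_ltl cn_proj)

lemma cn_lnth: "cn n C \<Longrightarrow> cn n I \<Longrightarrow> cn n (\<lambda>xs. lnth (C xs) (I xs))"
  unfolding lnth_def by (intro cn_lhd cn_ltlpow)

lemma cn_llen: "cn n C \<Longrightarrow> cn n (\<lambda>xs. llen (C xs))"
proof -
  assume C: "cn n C"
  have "cn (Suc n) (\<lambda>ys. (ltl ^^ (ys ! 0)) (C (tl ys)))"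
    by (intro cn_ltlpow cn_proj cn_tl C) auto
  then have "cp (Suc n) (\<lambda>ys. (ltl ^^ (ys ! 0)) (C (tl ys)) = 0)"
    by (intro cp_eq cn_const)
  then have "cn n (\<lambda>xs. bmin (Suc (C xs)) (\<lambda>i. (ltl ^^ i) (C xs) = 0))"
    by (intro cn_bmin cn_Suc C)
  then show ?thesis unfolding llen_def .
qed

lemma ltl_0[simp]: "ltl 0 = 0"
  by (simp add: ltl_def psnd_def prod_decode_def prod_decode_aux.simps)
lemma ltl_cons[simp]: "ltl (list_encode (x # xs)) = list_encode xs"
  by (simp add: ltl_def)
lemma lhd_cons[simp]: "lhd (list_encode (x # xs)) = x"
  by (simp add: lhd_def)
lemma lhd_Suc_pe[simp]: "lhd (Suc (prod_encode (a, b))) = a" by (simp add: lhd_def)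
lemma ltl_Suc_pe[simp]: "ltl (Suc (prod_encode (a, b))) = b" by (simp add: ltl_def)
lemma lcons_enc: "lcons a (list_encode xs) = list_encode (a # xs)"
  by (simp add: lcons_def)

lemma ltl_enc: "ltl (list_encode xs) = list_encode (tl xs)"
  by (cases xs) (auto simp: ltl_def simp del: ltl_0 intro: ltl_0[unfolded ltl_def, simplified])

lemma ltlpow_enc: "(ltl ^^ i) (list_encode xs) = list_encode (drop i xs)"
  by (induction i arbitrary: xs) (auto simp: ltl_enc drop_Suc funpow_swap1 drop_tl)

lemma lnth_enc: "i < length xs \<Longrightarrow> lnth (list_encode xs) i = xs ! i"
  unfolding lnth_def ltlpow_enc by (simp add: Cons_nth_drop_Suc[symmetric] lhd_def)

lemma length_le_enc: "length xs \<le> list_encode xs"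
proof (induction xs)
  case Nil then show ?case by simp
next
  case (Cons x xs) then show ?case using le_prod_encode_2[of "list_encode xs" x] by simp
qed

lemma list_encode_0_iff: "list_encode xs = 0 \<longleftrightarrow> xs = []"
  by (cases xs) auto

lemma llen_enc: "llen (list_encode xs) = length xs"
proof -
  have "(LEAST i. list_encode (drop i xs) = 0) = length xs"
    by (rule Least_equality) (auto simp: list_encode_0_iff)
  then show ?thesis unfolding llen_def ltlpow_enc bmin_def using length_le_enc[of xs]
    by (auto simp: list_encode_0_iff intro!: exI[of _ "length xs"])
qed

lemma lnth_dec: "i < llen c \<Longrightarrow> lnth c i = list_decode c ! i"
  by (metis list_decode_inverse llen_enc lnth_enc)
lemma llen_dec: "llen c = length (list_decode c)"
  by (metis list_decode_inverse llen_enc)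
lemma lcons_unfold[simp]: "lcons a b = Suc (prod_encode (a, b))" by (simp add: lcons_def)
lemma lcons_dec: "list_decode (lcons a c) = a # list_decode c"
  by (metis lcons_enc list_decode_inverse list_encode_inverse)
lemma lhd_dec: "c \<noteq> 0 \<Longrightarrow> lhd c = hd (list_decode c)"
  by (metis lhd_cons list.collapse list_decode_inverse list_encode.simps(1))
lemma ltl_dec: "list_decode (ltl c) = tl (list_decode c)"
  by (metis list_decode_inverse list_encode_inverse ltl_enc)




primrec enc :: "recf \<Rightarrow> nat" where
  "enc Zero = prod_encode (0, 0)"
| "enc Succ = prod_encode (1, 0)"
| "enc (Proj i) = prod_encode (2, i)"
| "enc (Comp f gs) = prod_encode (3, prod_encode (enc f, list_encode (map enc gs)))"
| "enc (Prim f g) = prod_encode (4, prod_encode (enc f, enc g))"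
| "enc (Mn f) = prod_encode (5, enc f)"

lemma triangle_ge: "n \<le> triangle n"
  by (induction n) auto

lemma pfst_le: "pfst c \<le> c"
  using le_prod_encode_1[of "pfst c" "psnd c"] by simp
lemma psnd_le: "psnd c \<le> c"
  using le_prod_encode_2[of "psnd c" "pfst c"] by simp
lemma psnd_less: "0 < pfst c \<Longrightarrow> psnd c < c"
proof -
  assume "0 < pfst c"
  have "c = prod_encode (pfst c, psnd c)" by simp
  then have "c = triangle (pfst c + psnd c) + pfst c" by (simp add: prod_encode_def)
  moreover have "pfst c + psnd c \<le> triangle (pfst c + psnd c)" by (rule triangle_ge)
  ultimately show ?thesis using \<open>0 < pfst c\<close> by linarith
qed
lemma set_list_encode_less: "x \<in> set xs \<Longrightarrow> x < list_encode xs"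
proof (induction xs)
  case Nil then show ?case by simp
next
  case (Cons a xs)
  then show ?case using le_prod_encode_1[of a "list_encode xs"] le_prod_encode_2[of "list_encode xs" a] by auto
qed
lemma set_list_decode_less: "x \<in> set (list_decode c) \<Longrightarrow> x < c"
  using set_list_encode_less[of x "list_decode c"] by simp

function dec :: "nat \<Rightarrow> recf" where
  "dec c = (if pfst c = 0 then Zero else if pfst c = 1 then Succ else if pfst c = 2 then Proj (psnd c)
     else if pfst c = 3 then Comp (dec (pfst (psnd c))) (map dec (list_decode (psnd (psnd c))))
     else if pfst c = 4 then Prim (dec (pfst (psnd c))) (dec (psnd (psnd c)))
     else if pfst c = 5 then Mn (dec (psnd c)) else Zero)"
  by auto
termination
proof (relation "Wellfounded.measure id")
  fix c x assume a: "\<not> pfst c = 0" "x \<in> set (list_decode (psnd (psnd c)))"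
  have "psnd c < c" using a psnd_less by auto
  then show "(x, c) \<in> Wellfounded.measure id" using set_list_decode_less[OF a(2)] psnd_le[of "psnd c"] by simp
qed (simp_all add: psnd_less le_less_trans[OF pfst_le psnd_less] le_less_trans[OF psnd_le psnd_less])

declare dec.simps[simp del]

lemma dec_enc[simp]: "dec (enc r) = r"
proof (induction r)
  case (Comp f gs)
  then show ?case by (subst dec.simps) (simp add: map_idI)
qed (subst dec.simps; simp)+

lemma dec_0: "pfst c = 0 \<Longrightarrow> dec c = Zero" by (subst dec.simps) simp
lemma dec_1: "pfst c = 1 \<Longrightarrow> dec c = Succ" by (subst dec.simps) simp
lemma dec_2: "pfst c = 2 \<Longrightarrow> dec c = Proj (psnd c)" by (subst dec.simps) simp
lemma dec_3: "pfst c = 3 \<Longrightarrow> dec c = Comp (dec (pfst (psnd c))) (map dec (list_decode (psnd (psnd c))))"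
  by (subst dec.simps) simp
lemma dec_4: "pfst c = 4 \<Longrightarrow> dec c = Prim (dec (pfst (psnd c))) (dec (psnd (psnd c)))"
  by (subst dec.simps) simp
lemma dec_5: "pfst c = 5 \<Longrightarrow> dec c = Mn (dec (psnd c))"
  by (subst dec.simps) simp

definition mkE :: "nat \<Rightarrow> nat \<Rightarrow> nat \<Rightarrow> nat \<Rightarrow> nat" where
  "mkE c x y w = prod_encode (c, prod_encode (x, prod_encode (y, w)))"
definition eR :: "nat \<Rightarrow> nat" where "eR e = pfst e"
definition eX :: "nat \<Rightarrow> nat" where "eX e = pfst (psnd e)"
definition eY :: "nat \<Rightarrow> nat" where "eY e = pfst (psnd (psnd e))"
definition eW :: "nat \<Rightarrow> nat" where "eW e = psnd (psnd (psnd e))"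

lemma mkE_simps[simp]: "eR (mkE c x y w) = c" "eX (mkE c x y w) = x" "eY (mkE c x y w) = y" "eW (mkE c x y w) = w"
  by (simp_all add: mkE_def eR_def eX_def eY_def eW_def)

definition mt :: "(nat \<Rightarrow> nat) \<Rightarrow> nat \<Rightarrow> nat \<Rightarrow> nat \<Rightarrow> nat \<Rightarrow> bool" where
  "mt ent i c x y \<longleftrightarrow> (\<exists>j<i. eR (ent j) = c \<and> eX (ent j) = x \<and> eY (ent j) = y)"
definition mtpos :: "(nat \<Rightarrow> nat) \<Rightarrow> nat \<Rightarrow> nat \<Rightarrow> nat \<Rightarrow> bool" where
  "mtpos ent i c x \<longleftrightarrow> (\<exists>j<i. eR (ent j) = c \<and> eX (ent j) = x \<and> eY (ent j) \<noteq> 0)"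

definition jst' :: "(nat \<Rightarrow> nat) \<Rightarrow> nat \<Rightarrow> nat \<Rightarrow> nat \<Rightarrow> nat \<Rightarrow> nat \<Rightarrow> bool" where
  "jst' ent i c x y w \<longleftrightarrow>
    (pfst c = 0 \<and> y = 0) \<or>
    (pfst c = 1 \<and> x \<noteq> 0 \<and> y = Suc (lhd x)) \<or>
    (pfst c = 2 \<and> psnd c < llen x \<and> y = lnth x (psnd c)) \<or>
    (pfst c = 3 \<and> llen w = llen (psnd (psnd c)) \<and>
       (\<forall>k<llen (psnd (psnd c)). mt ent i (lnth (psnd (psnd c)) k) x (lnth w k)) \<and>
       mt ent i (pfst (psnd c)) w y) \<or>
    (pfst c = 4 \<and> x \<noteq> 0 \<and> lhd x = 0 \<and> mt ent i (pfst (psnd c)) (ltl x) y) \<or>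
    (pfst c = 4 \<and> x \<noteq> 0 \<and> lhd x \<noteq> 0 \<and> mt ent i c (lcons (lhd x - 1) (ltl x)) w \<and>
       mt ent i (psnd (psnd c)) (lcons w (lcons (lhd x - 1) (ltl x))) y) \<or>
    (pfst c = 5 \<and> mt ent i (psnd c) (lcons y x) 0 \<and> (\<forall>k<y. mtpos ent i (psnd c) (lcons k x)))"

definition jst :: "(nat \<Rightarrow> nat) \<Rightarrow> nat \<Rightarrow> bool" where
  "jst ent i \<longleftrightarrow> jst' ent i (eR (ent i)) (eX (ent i)) (eY (ent i)) (eW (ent i))"

definition valid :: "nat \<Rightarrow> bool" where
  "valid t \<longleftrightarrow> (\<forall>i<llen t. jst (lnth t) i)"

definition Hp :: "nat \<Rightarrow> nat \<Rightarrow> bool" where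
  "Hp e t \<longleftrightarrow> valid t \<and> (\<exists>i<llen t. eR (lnth t i) = e \<and> eX (lnth t i) = lcons e 0)"

lemma cn_eR: "cn n F \<Longrightarrow> cn n (\<lambda>xs. eR (F xs))" unfolding eR_def by (rule cn_pfst)
lemma cn_eX: "cn n F \<Longrightarrow> cn n (\<lambda>xs. eX (F xs))" unfolding eX_def by (intro cn_pfst cn_psnd)
lemma cn_eY: "cn n F \<Longrightarrow> cn n (\<lambda>xs. eY (F xs))" unfolding eY_def by (intro cn_pfst cn_psnd)
lemma cn_eW: "cn n F \<Longrightarrow> cn n (\<lambda>xs. eW (F xs))" unfolding eW_def by (intro cn_pfst cn_psnd)

lemmas cnI2 = cnI cn_eR cn_eX cn_eY cn_eW cn_lnth cn_llen cn_lhd cn_ltl cn_lcons cn_pfst cn_psnd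

lemma cp_Hp: "cp 2 (\<lambda>xs. Hp (xs ! 0) (xs ! 1))"
  unfolding Hp_def valid_def jst_def jst'_def mt_def mtpos_def
  by (intro cnI2; simp)




definition validL :: "nat list \<Rightarrow> bool" where
  "validL L \<longleftrightarrow> (\<forall>i<length L. jst ((!) L) i)"

lemma mt_mono: "mt ent i c x y \<Longrightarrow> (\<forall>j<i. \<exists>j'<i'. ent' j' = ent j) \<Longrightarrow> mt ent' i' c x y"
  unfolding mt_def by (elim exE conjE) (smt (verit))
lemma mtpos_mono: "mtpos ent i c x \<Longrightarrow> (\<forall>j<i. \<exists>j'<i'. ent' j' = ent j) \<Longrightarrow> mtpos ent' i' c x"
  unfolding mtpos_def by (elim exE conjE) (smt (verit))
lemma mt_le: "mt ent i c x y \<Longrightarrow> i \<le> i' \<Longrightarrow> mt ent i' c x y"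
  unfolding mt_def using less_le_trans by blast
lemma mtpos_le: "mtpos ent i c x \<Longrightarrow> i \<le> i' \<Longrightarrow> mtpos ent i' c x"
  unfolding mtpos_def using less_le_trans by blast

lemma jst'_mono:
  assumes "jst' ent i c x y w" "\<forall>j<i. \<exists>j'<i'. ent' j' = ent j"
  shows "jst' ent' i' c x y w"
proof -
  have M: "\<And>c x y. mt ent i c x y \<Longrightarrow> mt ent' i' c x y" using mt_mono assms(2) by blast
  have MP: "\<And>c x. mtpos ent i c x \<Longrightarrow> mtpos ent' i' c x" using mtpos_mono assms(2) by blast
  show ?thesis using assms(1) unfolding jst'_def
    apply (elim disjE)
    apply (simp_all add: M MP)
    done
qed

lemma jst_mono: "jst ent i \<Longrightarrow> ent' i' = ent i \<Longrightarrow> \<forall>j<i. \<exists>j'<i'. ent' j' = ent j \<Longrightarrow> jst ent' i'"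
  unfolding jst_def by (rule jst'_mono) simp_all

lemma validL_Nil: "validL []" by (simp add: validL_def)

lemma validL_append: "validL L1 \<Longrightarrow> validL L2 \<Longrightarrow> validL (L1 @ L2)"
  unfolding validL_def
proof (intro allI impI)
  fix i assume v1: "\<forall>i<length L1. jst ((!) L1) i" and v2: "\<forall>i<length L2. jst ((!) L2) i"
    and i: "i < length (L1 @ L2)"
  show "jst ((!) (L1 @ L2)) i"
  proof (cases "i < length L1")
    case True
    show ?thesis
    proof (rule jst_mono[OF v1[rule_format, OF True]])
      show "(L1 @ L2) ! i = L1 ! i" using True by (simp add: nth_append)
      show "\<forall>j<i. \<exists>j'<i. (L1 @ L2) ! j' = L1 ! j"
        using True by (intro allI impI, rule_tac x=j in exI) (simp add: nth_append)
    qed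
  next
    case False
    define i2 where "i2 = i - length L1"
    have i2: "i = length L1 + i2" "i2 < length L2" using i False unfolding i2_def by auto
    show ?thesis
    proof (rule jst_mono[OF v2[rule_format, OF i2(2)]])
      show "(L1 @ L2) ! i = L2 ! i2" using i2 by (simp add: nth_append)
      show "\<forall>j<i2. \<exists>j'<i. (L1 @ L2) ! j' = L2 ! j"
      proof (intro allI impI)
        fix j assume "j < i2"
        then show "\<exists>j'<i. (L1 @ L2) ! j' = L2 ! j" using i2
          by (intro exI[of _ "length L1 + j"]) (simp add: nth_append)
      qed
    qed
  qed
qed

lemma validL_snoc:
  assumes "validL L" "jst' ((!) (L @ [E])) (length L) (eR E) (eX E) (eY E) (eW E)"
  shows "validL (L @ [E])"
  unfolding validL_def
proof (intro allI impI)
  fix i assume "i < length (L @ [E])"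
  then consider "i < length L" | "i = length L" by fastforce
  then show "jst ((!) (L @ [E])) i"
  proof cases
    case 1
    show ?thesis
    proof (rule jst_mono[OF assms(1)[unfolded validL_def, rule_format, OF 1]])
      show "(L @ [E]) ! i = L ! i" using 1 by (simp add: nth_append)
      show "\<forall>j<i. \<exists>j'<i. (L @ [E]) ! j' = L ! j"
        using 1 by (intro allI impI, rule_tac x=j in exI) (simp add: nth_append)
    qed
  next
    case 2
    then show ?thesis using assms(2) unfolding jst_def by simp
  qed
qed

lemma mt_in: "e \<in> set L \<Longrightarrow> eR e = c \<Longrightarrow> eX e = x \<Longrightarrow> eY e = y \<Longrightarrow> mt ((!) (L @ M)) (length L) c x y"
proof -
  assume a: "e \<in> set L" "eR e = c" "eX e = x" "eY e = y"
  then obtain k where "k < length L" "L ! k = e" by (auto simp: in_set_conv_nth)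
  then show ?thesis unfolding mt_def using a by (intro exI[of _ k]) (simp add: nth_append)
qed

lemma mtpos_in: "e \<in> set L \<Longrightarrow> eR e = c \<Longrightarrow> eX e = x \<Longrightarrow> eY e \<noteq> 0 \<Longrightarrow> mtpos ((!) (L @ M)) (length L) c x"
proof -
  assume a: "e \<in> set L" "eR e = c" "eX e = x" "eY e \<noteq> 0"
  then obtain k where "k < length L" "L ! k = e" by (auto simp: in_set_conv_nth)
  then show ?thesis unfolding mtpos_def using a by (intro exI[of _ k]) (simp add: nth_append)
qed

lemma combine:
  "(\<forall>k<(n::nat). \<exists>L. validL L \<and> (\<exists>e\<in>set L. Q k e)) \<Longrightarrow> \<exists>L. validL L \<and> (\<forall>k<n. \<exists>e\<in>set L. Q k e)"
proof (induction n)
  case 0 then show ?case using validL_Nil by auto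
next
  case (Suc n)
  then obtain L1 where L1: "validL L1" "\<forall>k<n. \<exists>e\<in>set L1. Q k e" by auto
  from Suc.prems have "\<exists>L. validL L \<and> (\<exists>e\<in>set L. Q n e)" by blast
  then obtain L2 where L2: "validL L2" "\<exists>e\<in>set L2. Q n e" by blast
  have "validL (L1 @ L2)" using L1 L2 validL_append by blast
  moreover have "\<forall>k<Suc n. \<exists>e\<in>set (L1 @ L2). Q k e"
  proof (intro allI impI)
    fix k assume "k < Suc n"
    then consider "k < n" | "k = n" by linarith
    then show "\<exists>e\<in>set (L1 @ L2). Q k e"
      by cases (use L1 L2 in auto)
  qed
  ultimately show ?case by blast
qed

definition hasE :: "nat list \<Rightarrow> nat \<Rightarrow> nat \<Rightarrow> nat \<Rightarrow> bool" where
  "hasE L c x y \<longleftrightarrow> (\<exists>e\<in>set L. eR e = c \<and> eX e = x \<and> eY e = y)"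

lemma mt_hasE: "hasE L c x y \<Longrightarrow> mt ((!) (L @ M)) (length L) c x y"
  unfolding hasE_def using mt_in by blast

lemma mt_hasE2: "hasE L2 c x y \<Longrightarrow> mt ((!) (L1 @ L2 @ M)) (length L1 + length L2) c x y"
  using mt_hasE[of "L1 @ L2" c x y M] unfolding hasE_def by auto

lemma complete: "eval r xs y \<Longrightarrow> \<exists>L. validL L \<and> hasE L (enc r) (list_encode xs) y"
proof (induction r xs y rule: eval.induct)
  case (eval_Zero xs)
  let ?E = "mkE (enc Zero) (list_encode xs) 0 0"
  have "validL ([] @ [?E])" by (rule validL_snoc) (auto simp: validL_Nil jst'_def)
  then show ?case unfolding hasE_def by (intro exI[of _ "[?E]"]) auto
next
  case (eval_Succ x xs)
  let ?E = "mkE (enc Succ) (list_encode (x # xs)) (Suc x) 0"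
  have "validL ([] @ [?E])" by (rule validL_snoc) (auto simp: validL_Nil jst'_def lhd_def)
  then show ?case unfolding hasE_def by (intro exI[of _ "[?E]"]) auto
next
  case (eval_Proj i xs)
  let ?E = "mkE (enc (Proj i)) (list_encode xs) (xs ! i) 0"
  have "validL ([] @ [?E])" by (rule validL_snoc) (use eval_Proj in \<open>auto simp: validL_Nil jst'_def llen_enc lnth_enc\<close>)
  then show ?case unfolding hasE_def by (intro exI[of _ "[?E]"]) auto
next
  case (eval_Comp xs gs ys f z)
  have len: "length gs = length ys" using eval_Comp(1) by (rule list_all2_lengthD)
  have "\<forall>k<length gs. \<exists>L. validL L \<and> (\<exists>e\<in>set L. eR e = enc (gs ! k) \<and> eX e = list_encode xs \<and> eY e = ys ! k)"
    using eval_Comp(1) unfolding list_all2_conv_all_nth hasE_def by auto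
  from combine[OF this] obtain L1 where L1: "validL L1"
    "\<forall>k<length gs. hasE L1 (enc (gs ! k)) (list_encode xs) (ys ! k)"
    unfolding hasE_def by blast
  from eval_Comp.IH(2) obtain L2 where L2: "validL L2" "hasE L2 (enc f) (list_encode ys) z" by blast
  let ?E = "mkE (enc (Comp f gs)) (list_encode xs) z (list_encode ys)"
  have "validL ((L1 @ L2) @ [?E])"
  proof (rule validL_snoc)
    show "validL (L1 @ L2)" using L1 L2 validL_append by blast
    have A: "mt ((!) (L1 @ L2 @ [?E])) (length L1 + length L2) (enc (gs ! k)) (list_encode xs) (ys ! k)"
      if "k < length gs" for k
      using mt_le[OF mt_hasE[OF L1(2)[rule_format, OF that], of "L2 @ [?E]"]] by simp
    have B: "mt ((!) (L1 @ L2 @ [?E])) (length L1 + length L2) (enc f) (list_encode ys) z"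
      by (rule mt_hasE2[OF L2(2)])
    show "jst' ((!) ((L1 @ L2) @ [?E])) (length (L1 @ L2)) (eR ?E) (eX ?E) (eY ?E) (eW ?E)"
      unfolding jst'_def using A B len by (simp add: llen_enc lnth_enc)
  qed
  then show ?case unfolding hasE_def by (intro exI[of _ "(L1 @ L2) @ [?E]"]) auto
next
  case (eval_Prim0 f xs y g)
  from eval_Prim0.IH obtain L1 where L1: "validL L1" "hasE L1 (enc f) (list_encode xs) y" by blast
  let ?E = "mkE (enc (Prim f g)) (list_encode (0 # xs)) y 0"
  have "validL (L1 @ [?E])"
  proof (rule validL_snoc)
    show "validL L1" by (rule L1)
    have "mt ((!) (L1 @ [?E])) (length L1) (enc f) (list_encode xs) y" by (rule mt_hasE[OF L1(2)])
    then show "jst' ((!) (L1 @ [?E])) (length L1) (eR ?E) (eX ?E) (eY ?E) (eW ?E)"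
      unfolding jst'_def by simp
  qed
  then show ?case unfolding hasE_def by (intro exI[of _ "L1 @ [?E]"]) auto
next
  case (eval_PrimS f g n xs y z)
  from eval_PrimS.IH(1) obtain L1 where L1: "validL L1" "hasE L1 (enc (Prim f g)) (list_encode (n # xs)) y" by blast
  from eval_PrimS.IH(2) obtain L2 where L2: "validL L2" "hasE L2 (enc g) (list_encode (y # n # xs)) z" by blast
  let ?E = "mkE (enc (Prim f g)) (list_encode (Suc n # xs)) z y"
  have "validL ((L1 @ L2) @ [?E])"
  proof (rule validL_snoc)
    show "validL (L1 @ L2)" using L1 L2 validL_append by blast
    have A: "mt ((!) (L1 @ L2 @ [?E])) (length L1 + length L2) (enc (Prim f g)) (list_encode (n # xs)) y"
      using mt_le[OF mt_hasE[OF L1(2), of "L2 @ [?E]"]] by simp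
    have B: "mt ((!) (L1 @ L2 @ [?E])) (length L1 + length L2) (enc g) (list_encode (y # n # xs)) z"
      by (rule mt_hasE2[OF L2(2)])
    show "jst' ((!) ((L1 @ L2) @ [?E])) (length (L1 @ L2)) (eR ?E) (eX ?E) (eY ?E) (eW ?E)"
      unfolding jst'_def using A B by simp
  qed
  then show ?case unfolding hasE_def by (intro exI[of _ "(L1 @ L2) @ [?E]"]) auto
next
  case (eval_Mn f n xs)
  have "\<forall>k<n. \<exists>L. validL L \<and> (\<exists>e\<in>set L. eR e = enc f \<and> eX e = list_encode (k # xs) \<and> eY e \<noteq> 0)"
  proof (intro allI impI)
    fix k assume "k < n"
    then obtain y where "0 < y" "\<exists>L. validL L \<and> hasE L (enc f) (list_encode (k # xs)) y"
      using eval_Mn.IH(2) by blast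
    then show "\<exists>L. validL L \<and> (\<exists>e\<in>set L. eR e = enc f \<and> eX e = list_encode (k # xs) \<and> eY e \<noteq> 0)"
      unfolding hasE_def by fastforce
  qed
  from combine[OF this] obtain L1 where L1: "validL L1"
    "\<forall>k<n. \<exists>e\<in>set L1. eR e = enc f \<and> eX e = list_encode (k # xs) \<and> eY e \<noteq> 0" by blast
  from eval_Mn.IH(1) obtain L2 where L2: "validL L2" "hasE L2 (enc f) (list_encode (n # xs)) 0" by blast
  let ?E = "mkE (enc (Mn f)) (list_encode xs) n 0"
  have "validL ((L1 @ L2) @ [?E])"
  proof (rule validL_snoc)
    show "validL (L1 @ L2)" using L1 L2 validL_append by blast
    have A: "mtpos ((!) (L1 @ L2 @ [?E])) (length L1 + length L2) (enc f) (list_encode (k # xs))"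
      if kn: "k < n" for k
    proof -
      obtain e where "e \<in> set L1" "eR e = enc f" "eX e = list_encode (k # xs)" "eY e \<noteq> 0"
        using L1(2) kn by blast
      from mtpos_le[OF mtpos_in[OF this, of "L2 @ [?E]"]] show ?thesis
        by simp
    qed
    have B: "mt ((!) (L1 @ L2 @ [?E])) (length L1 + length L2) (enc f) (list_encode (n # xs)) 0"
      by (rule mt_hasE2[OF L2(2)])
    show "jst' ((!) ((L1 @ L2) @ [?E])) (length (L1 @ L2)) (eR ?E) (eX ?E) (eY ?E) (eW ?E)"
      unfolding jst'_def using A B by simp
  qed
  then show ?case unfolding hasE_def by (intro exI[of _ "(L1 @ L2) @ [?E]"]) auto
qed




lemma list_decode_nz: "x \<noteq> 0 \<Longrightarrow> list_decode x = lhd x # list_decode (ltl x)"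
proof -
  assume "x \<noteq> 0"
  then have ne: "list_decode x \<noteq> []" by (metis list_decode_inverse list_encode.simps(1))
  then show ?thesis using lhd_dec[OF \<open>x \<noteq> 0\<close>] ltl_dec[of x] by simp
qed

lemma sound:
  assumes v: "validL L"
  shows "i < length L \<Longrightarrow> eval (dec (eR (L ! i))) (list_decode (eX (L ! i))) (eY (L ! i))"
proof (induction i rule: less_induct)
  case (less i)
  have MT: "eval (dec c) (list_decode x) y" if "mt ((!) L) i c x y" for c x y
    using that less unfolding mt_def by (elim exE conjE) (metis less_trans)
  have MP: "\<exists>y. eval (dec c) (list_decode x) y \<and> y \<noteq> 0" if "mtpos ((!) L) i c x" for c x
    using that less unfolding mtpos_def by (elim exE conjE) (metis less_trans)
  define c where "c = eR (L ! i)"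
  define x where "x = eX (L ! i)"
  define y where "y = eY (L ! i)"
  define w where "w = eW (L ! i)"
  have J: "jst' ((!) L) i c x y w" using v less.prems unfolding validL_def jst_def c_def x_def y_def w_def by blast
  have "eval (dec c) (list_decode x) y"
    using J unfolding jst'_def
  proof (elim disjE conjE)
    assume "pfst c = 0" "y = 0" then show ?thesis by (simp add: dec_0 eval_Zero)
  next
    assume a: "pfst c = 1" "x \<noteq> 0" "y = Suc (lhd x)"
    then show ?thesis by (simp add: dec_1 list_decode_nz eval_Succ)
  next
    assume a: "pfst c = 2" "psnd c < llen x" "y = lnth x (psnd c)"
    then show ?thesis by (simp add: dec_2 lnth_dec llen_dec eval_Proj)
  next
    assume a: "pfst c = 3" "llen w = llen (psnd (psnd c))"
      "\<forall>k<llen (psnd (psnd c)). mt ((!) L) i (lnth (psnd (psnd c)) k) x (lnth w k)"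
      "mt ((!) L) i (pfst (psnd c)) w y"
    have "list_all2 (\<lambda>g. eval g (list_decode x)) (map dec (list_decode (psnd (psnd c)))) (list_decode w)"
      unfolding list_all2_conv_all_nth
    proof (intro conjI allI impI)
      show "length (map dec (list_decode (psnd (psnd c)))) = length (list_decode w)"
        using a(2) by (simp add: llen_dec)
      fix k assume "k < length (map dec (list_decode (psnd (psnd c))))"
      then have k: "k < llen (psnd (psnd c))" "k < llen w" using a(2) by (simp_all add: llen_dec)
      show "eval (map dec (list_decode (psnd (psnd c))) ! k) (list_decode x) (list_decode w ! k)"
        using MT[OF a(3)[rule_format, OF k(1)]] k by (simp add: lnth_dec llen_dec)
    qed
    then show ?thesis using MT[OF a(4)] a(1) by (simp add: dec_3 eval_Comp)
  next
    assume a: "pfst c = 4" "x \<noteq> 0" "lhd x = 0" "mt ((!) L) i (pfst (psnd c)) (ltl x) y"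
    then show ?thesis using MT[OF a(4)] by (simp add: dec_4 list_decode_nz eval_Prim0)
  next
    assume a: "pfst c = 4" "x \<noteq> 0" "lhd x \<noteq> 0" "mt ((!) L) i c (lcons (lhd x - 1) (ltl x)) w"
      "mt ((!) L) i (psnd (psnd c)) (lcons w (lcons (lhd x - 1) (ltl x))) y"
    obtain n where n: "lhd x = Suc n" using a(3) by (cases "lhd x") auto
    have e1: "eval (dec c) (n # list_decode (ltl x)) w" using MT[OF a(4)] n by simp
    have e2: "eval (dec (psnd (psnd c))) (w # n # list_decode (ltl x)) y" using MT[OF a(5)] n by simp
    have "eval (Prim (dec (pfst (psnd c))) (dec (psnd (psnd c)))) (Suc n # list_decode (ltl x)) y"
      by (rule eval_PrimS) (use e1 e2 dec_4[OF a(1)] in simp_all)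
    then show ?thesis using a n by (simp add: dec_4 list_decode_nz)
  next
    assume a: "pfst c = 5" "mt ((!) L) i (psnd c) (lcons y x) 0" "\<forall>k<y. mtpos ((!) L) i (psnd c) (lcons k x)"
    have "eval (Mn (dec (psnd c))) (list_decode x) y"
    proof (rule eval_Mn)
      show "eval (dec (psnd c)) (y # list_decode x) 0" using MT[OF a(2)] by simp
      show "\<forall>k<y. \<exists>ya. eval (dec (psnd c)) (k # list_decode x) ya \<and> 0 < ya"
        using MP a(3) by fastforce
    qed
    then show ?thesis using a(1) by (simp add: dec_5)
  qed
  then show ?case unfolding c_def x_def y_def .
qed

lemma Hp_iff: "(\<exists>t. Hp (enc r) t) \<longleftrightarrow> (\<exists>y. eval r [enc r] y)"
proof
  assume "\<exists>t. Hp (enc r) t"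
  then obtain t i where v: "valid t" and i: "i < llen t" "eR (lnth t i) = enc r" "eX (lnth t i) = lcons (enc r) 0"
    unfolding Hp_def by blast
  define L where "L = list_decode t"
  have lnthL: "j < llen t \<Longrightarrow> lnth t j = L ! j" for j unfolding L_def by (simp add: lnth_dec)
  have lenL: "llen t = length L" unfolding L_def by (simp add: llen_dec)
  have "validL L" unfolding validL_def
  proof (intro allI impI)
    fix j assume j: "j < length L"
    show "jst ((!) L) j"
    proof (rule jst_mono[of "lnth t" j])
      show "jst (lnth t) j" using v j lenL unfolding valid_def by auto
      show "L ! j = lnth t j" using j lenL lnthL by auto
      show "\<forall>k<j. \<exists>j'<j. L ! j' = lnth t k" using j lenL lnthL by (metis less_trans)
    qed
  qed
  from sound[OF this, of i] i lenL lnthL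
  have "eval (dec (enc r)) (list_decode (lcons (enc r) 0)) (eY (L ! i))" by auto
  then show "\<exists>y. eval r [enc r] y" by auto
next
  assume "\<exists>y. eval r [enc r] y"
  then obtain y where "eval r [enc r] y" by blast
  from complete[OF this] obtain L where L: "validL L" "hasE L (enc r) (list_encode [enc r]) y" by blast
  define t where "t = list_encode L"
  have lnthL: "j < length L \<Longrightarrow> lnth t j = L ! j" for j unfolding t_def by (simp add: lnth_enc)
  have lenL: "llen t = length L" unfolding t_def by (simp add: llen_enc)
  have "valid t" unfolding valid_def
  proof (intro allI impI)
    fix j assume j: "j < llen t"
    show "jst (lnth t) j"
    proof (rule jst_mono[of "(!) L" j])
      show "jst ((!) L) j" using L(1) j lenL unfolding validL_def by auto
      show "lnth t j = L ! j" using j lenL lnthL by auto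
      show "\<forall>k<j. \<exists>j'<j. lnth t j' = L ! k" using j lenL lnthL by (metis less_trans)
    qed
  qed
  moreover obtain k where "k < length L" "eR (L ! k) = enc r" "eX (L ! k) = list_encode [enc r]"
    using L(2) unfolding hasE_def by (metis in_set_conv_nth)
  ultimately have "Hp (enc r) t" unfolding Hp_def using lnthL lenL by (intro conjI exI[of _ k]) auto
  then show "\<exists>t. Hp (enc r) t" by blast
qed

theorem undecidable: "\<not> cp 1 (\<lambda>xs. \<exists>t. Hp (xs ! 0) t)"
proof
  assume "cp 1 (\<lambda>xs. \<exists>t. Hp (xs ! 0) t)"
  then obtain rD where rD: "\<And>xs. length xs = 1 \<Longrightarrow> eval rD xs (if \<exists>t. Hp (xs ! 0) t then 1 else 0)"
    unfolding cp_def cn_def by blast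
  define p where "p = Comp (Mn (Proj 1)) [rD]"
  define e where "e = enc p"
  have D: "eval rD [e] (if \<exists>t. Hp e t then 1 else 0)" using rD[of "[e]"] by simp
  have "(\<exists>y. eval p [e] y) \<longleftrightarrow> \<not> (\<exists>t. Hp e t)"
  proof
    assume "\<exists>y. eval p [e] y"
    then obtain y where "eval p [e] y" by blast
    then obtain ys where ys: "list_all2 (\<lambda>g. eval g [e]) [rD] ys" "eval (Mn (Proj 1)) ys y"
      unfolding p_def by (blast elim: evalCompE)
    then obtain v where v: "ys = [v]" "eval rD [e] v" by (cases ys) auto
    then have v': "v = (if \<exists>t. Hp e t then 1 else 0)" using D eval_fun by blast
    from ys(2) v(1) have "eval (Proj 1) [y, v] 0" by (blast elim: evalMnE)
    then have "v = 0" using eval_fun[of "Proj 1" "[y, v]" 0 v] eval_Proj[of 1 "[y, v]"] by simp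
    then show "\<not> (\<exists>t. Hp e t)" using v' by (simp split: if_splits)
  next
    assume nh: "\<not> (\<exists>t. Hp e t)"
    then have D0: "eval rD [e] 0" using D by simp
    have M: "eval (Mn (Proj 1)) [0] 0"
      by (rule eval_Mn) (use eval_Proj[of 1 "[0, 0]"] in auto)
    have "eval p [e] 0" unfolding p_def
      by (rule eval_Comp[where ys="[0]"]) (use D0 M in auto)
    then show "\<exists>y. eval p [e] y" by blast
  qed
  moreover have "(\<exists>t. Hp e t) \<longleftrightarrow> (\<exists>y. eval p [e] y)" unfolding e_def by (rule Hp_iff)
  ultimately show False by blast
qed




lemma cn2_rec: "cn 2 (\<lambda>xs. f (xs ! 0) (xs ! 1)) \<Longrightarrow> recursive2 f"
  unfolding cn_def recursive2_def
proof (elim exE)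
  fix r assume "\<forall>xs. length xs = 2 \<longrightarrow> eval r xs (f (xs ! 0) (xs ! 1))"
  then have "\<forall>n k. eval r [n, k] (f n k)" by (metis length_Cons list.size(3) nth_Cons_0 nth_Cons_Suc numeral_2_eq_2 One_nat_def)
  then show "\<exists>r. \<forall>n k. eval r [n, k] (f n k)" by blast
qed

lemma rec_cn2: "recursive2 f \<Longrightarrow> cn 2 (\<lambda>xs. f (xs ! 0) (xs ! 1))"
  unfolding cn_def recursive2_def
proof (elim exE)
  fix r assume r: "\<forall>n k. eval r [n, k] (f n k)"
  have "eval r xs (f (xs ! 0) (xs ! 1))" if "length xs = 2" for xs
    using len2[OF that] r by auto
  then show "\<exists>r. \<forall>xs. length xs = 2 \<longrightarrow> eval r xs (f (xs ! 0) (xs ! 1))" by blast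
qed

lemma cp_Hp': "cn n E \<Longrightarrow> cn n T \<Longrightarrow> cp n (\<lambda>xs. Hp (E xs) (T xs))"
  unfolding cp_def by (rule cn_comp2[OF cp_Hp[unfolded cp_def]])

definition xK :: "nat \<Rightarrow> real" where
  "xK e = (if \<exists>t. Hp e t then (1/2) ^ (LEAST t. Hp e t) else 0)"

lemma xK_nonneg: "0 \<le> xK e" unfolding xK_def by auto

lemma xK_nz: "xK e \<noteq> 0 \<longleftrightarrow> (\<exists>t. Hp e t)" unfolding xK_def by auto

lemma inverse_xK: "xK e \<noteq> 0 \<Longrightarrow> 1 \<le> inverse (xK e)"
  unfolding xK_def by (auto simp: power_inverse[symmetric] split: if_splits)

lemma computable_const: "computable_real_seq (\<lambda>_. real c)"
proof -
  have r1: "recursive2 (\<lambda>n k. c)" by (rule cn2_rec) (rule cn_const)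
  have r2: "recursive2 (\<lambda>n k. 1)" by (rule cn2_rec) (rule cn_const)
  have r3: "recursive2 (\<lambda>n k. 0)" by (rule cn2_rec) (rule cn_const)
  have "computable_rat_seq2 (\<lambda>n k. of_nat c)"
    unfolding computable_rat_seq2_def using r1 r2 r3 by (intro exI[of _ "\<lambda>n k. c"] exI[of _ "\<lambda>n k. 1"] exI[of _ "\<lambda>n k. 0"]) auto
  then show ?thesis unfolding computable_real_seq_def by (intro exI[of _ "\<lambda>n k. of_nat c"]) auto
qed

lemma computable_xK: "computable_real_seq xK"
proof -
  define a where "a = (\<lambda>e k. if \<exists>t<Suc k. Hp e t then 1 else (0::nat))"
  define b where "b = (\<lambda>e k. (2::nat) ^ bmin (Suc k) (\<lambda>t. Hp e t))"
  define s where "s = (\<lambda>(e::nat) (k::nat). 0::nat)"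
  have ra: "recursive2 a" unfolding a_def
    by (rule cn2_rec) (intro cnI cp_Hp'; simp)
  have rb: "recursive2 b" unfolding b_def
    by (rule cn2_rec) (intro cnI cp_Hp'; simp)
  have rs: "recursive2 s" unfolding s_def by (rule cn2_rec) (rule cn_const)
  define q where "q = (\<lambda>e k. (-1) ^ (s e k) * of_nat (a e k) / (of_nat (b e k) :: rat))"
  have cq: "computable_rat_seq2 q" unfolding computable_rat_seq2_def q_def
    using ra rb rs by (intro exI[of _ a] exI[of _ b] exI[of _ s]) (auto simp: b_def)
  have "\<bar>real_of_rat (q e k) - xK e\<bar> \<le> 1 / 2 ^ k" for e k
  proof (cases "\<exists>t<Suc k. Hp e t")
    case True
    then have bm: "bmin (Suc k) (\<lambda>t. Hp e t) = (LEAST t. Hp e t)" unfolding bmin_def by auto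
    have "real_of_rat (q e k) = 1 / 2 ^ (LEAST t. Hp e t)"
      unfolding q_def a_def b_def s_def using True bm by (simp add: of_rat_divide of_rat_power)
    moreover have "xK e = 1 / 2 ^ (LEAST t. Hp e t)" unfolding xK_def using True by (auto simp: power_one_over)
    ultimately show ?thesis by simp
  next
    case False
    then have q0: "real_of_rat (q e k) = 0" unfolding q_def a_def b_def s_def by simp
    show ?thesis
    proof (cases "\<exists>t. Hp e t")
      case True
      have "Suc k \<le> (LEAST t. Hp e t)"
        using False True LeastI_ex[OF True] by (meson not_less)
      then have "(1/2::real) ^ (LEAST t. Hp e t) \<le> (1/2) ^ k"
        by (intro power_decreasing) auto
      then show ?thesis using q0 True unfolding xK_def by (simp add: power_one_over)
    next
      case False
      then show ?thesis using q0 unfolding xK_def by auto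
    qed
  qed
  then show ?thesis unfolding computable_real_seq_def using cq by blast
qed

lemma no_test_gen:
  assumes cy: "computable_real_seq y"
    and sep: "\<And>e. xK e \<noteq> 0 \<longleftrightarrow> (pol \<longleftrightarrow> 1/2 \<le> y e)"
    and gap: "\<And>e. \<bar>y e - 1/2\<bar> \<ge> 1/4 + 1/4"
  shows False
proof -
  obtain q where cq: "computable_rat_seq2 q" and qa: "\<And>n k. \<bar>real_of_rat (q n k) - y n\<bar> \<le> 1 / 2 ^ k"
    using cy unfolding computable_real_seq_def by blast
  obtain a b s where ra: "recursive2 a" and rb: "recursive2 b" and rs: "recursive2 s"
    and qd: "\<And>n k. b n k \<noteq> 0 \<and> q n k = (-1) ^ (s n k) * of_nat (a n k) / of_nat (b n k)"
    using cq unfolding computable_rat_seq2_def by blast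
  define D where "D = (\<lambda>e. (\<exists>h<Suc (s e 2). s e 2 = 2 * h) \<and> b e 2 \<le> 2 * a e 2)"
  have D_iff: "D e \<longleftrightarrow> 1/2 \<le> real_of_rat (q e 2)" for e
  proof -
    have bpos: "0 < real (b e 2)" using qd[of e 2] by simp
    have qv: "real_of_rat (q e 2) = (-1) ^ (s e 2) * real (a e 2) / real (b e 2)"
      using qd[of e 2] by (simp add: of_rat_divide of_rat_mult of_rat_power)
    have ev: "(\<exists>h<Suc (s e 2). s e 2 = 2 * h) \<longleftrightarrow> even (s e 2)" by (auto elim!: evenE)
    show ?thesis
    proof (cases "even (s e 2)")
      case True
      have c: "(real (b e 2) \<le> 2 * real (a e 2)) \<longleftrightarrow> (b e 2 \<le> 2 * a e 2)"
      proof -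
        have "2 * real (a e 2) = real (2 * a e 2)" by simp
        then show ?thesis by (simp only: of_nat_le_iff)
      qed
      then show ?thesis unfolding D_def ev qv using True bpos by (simp add: field_simps)
    next
      case False
      have "(-1) ^ (s e 2) * real (a e 2) / real (b e 2) \<le> 0"
        using False bpos by (simp add: divide_nonpos_pos)
      then have "\<not> (1/2 \<le> real_of_rat (q e 2))" using qv by linarith
      then show ?thesis unfolding D_def ev using False by simp
    qed
  qed
  have y_iff: "1/2 \<le> y e \<longleftrightarrow> 1/2 \<le> real_of_rat (q e 2)" for e
    using qa[of e 2] gap[of e] by (auto simp: abs_if split: if_splits)
  have sepD: "(\<exists>t. Hp e t) \<longleftrightarrow> (pol \<longleftrightarrow> D e)" for e
    using sep[of e] xK_nz[of e] D_iff[of e] y_iff[of e] by blast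
  have ca: "cn 2 (\<lambda>xs. a (xs ! 0) (xs ! 1))" by (rule rec_cn2[OF ra])
  have cb: "cn 2 (\<lambda>xs. b (xs ! 0) (xs ! 1))" by (rule rec_cn2[OF rb])
  have cs: "cn 2 (\<lambda>xs. s (xs ! 0) (xs ! 1))" by (rule rec_cn2[OF rs])
  have ca1: "cn 1 (\<lambda>xs. a (xs ! 0) 2)" by (rule cn_comp2[OF ca]) (intro cnI; simp)+
  have cb1: "cn 1 (\<lambda>xs. b (xs ! 0) 2)" by (rule cn_comp2[OF cb]) (intro cnI; simp)+
  have cs1: "cn 1 (\<lambda>xs. s (xs ! 0) 2)" by (rule cn_comp2[OF cs]) (intro cnI; simp)+
  have cs1': "cn (Suc 1) (\<lambda>ys. s (tl ys ! 0) 2)"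
    using cn_tl[OF cs1] by simp
  have cD: "cp 1 (\<lambda>xs. D (xs ! 0))" unfolding D_def
    by (intro cp_conj cp_bex cp_le cp_eq cn_mult cn_Suc cn_const cn_proj cs1 cs1' ca1 cb1) simp_all
  have "cp 1 (\<lambda>xs. \<exists>t. Hp (xs ! 0) t)"
  proof (cases pol)
    case True
    show ?thesis by (rule cp_ext[OF cD]) (use sepD True in auto)
  next
    case False
    show ?thesis by (rule cp_ext[OF cp_not[OF cD]]) (use sepD False in auto)
  qed
  then show False using undecidable by blast
qed

lemma no_test1:
  assumes "computable_real_seq y" "\<And>e. xK e \<noteq> 0 \<Longrightarrow> 1 \<le> y e" "\<And>e. xK e = 0 \<Longrightarrow> y e \<le> 0"
  shows False
proof (rule no_test_gen[OF assms(1), where pol=True])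
  fix e show "xK e \<noteq> 0 \<longleftrightarrow> (True \<longleftrightarrow> 1/2 \<le> y e)" using assms(2,3)[of e] by force
  show "\<bar>y e - 1/2\<bar> \<ge> 1/4 + 1/4" using assms(2,3)[of e] by (cases "xK e = 0") auto
qed

lemma no_test2:
  assumes "computable_real_seq y" "\<And>e. xK e \<noteq> 0 \<Longrightarrow> y e \<le> 0" "\<And>e. xK e = 0 \<Longrightarrow> 1 \<le> y e"
  shows False
proof (rule no_test_gen[OF assms(1), where pol=False])
  fix e show "xK e \<noteq> 0 \<longleftrightarrow> (False \<longleftrightarrow> 1/2 \<le> y e)" using assms(2,3)[of e] by force
  show "\<bar>y e - 1/2\<bar> \<ge> 1/4 + 1/4" using assms(2,3)[of e] by (cases "xK e = 0") auto
qed




lemma adj_mult: "adjoint_cmat (A ** B) = adjoint_cmat B ** adjoint_cmat A"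
  unfolding adjoint_cmat_def matrix_matrix_mult_def
  by (simp add: vec_eq_iff mult.commute)

lemma adj_adj[simp]: "adjoint_cmat (adjoint_cmat A) = A"
  unfolding adjoint_cmat_def by (simp add: vec_eq_iff)

lemma penrose_unique:
  assumes X: "penrose A X" and Y: "penrose A Y"
  shows "X = Y"
proof -
  have X1: "A ** X ** A = A" and X2: "X ** A ** X = X" and X3: "adjoint_cmat (A ** X) = A ** X"
    and X4: "adjoint_cmat (X ** A) = X ** A" using X unfolding penrose_def by auto
  have Y1: "A ** Y ** A = A" and Y2: "Y ** A ** Y = Y" and Y3: "adjoint_cmat (A ** Y) = A ** Y"
    and Y4: "adjoint_cmat (Y ** A) = Y ** A" using Y unfolding penrose_def by auto
  let ?a = adjoint_cmat
  have "X = X ** (A ** X)" using X2 by (simp add: matrix_mul_assoc)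
  also have "\<dots> = X ** ?a (A ** X)" using X3 by simp
  also have "\<dots> = X ** (?a X ** ?a A)" by (simp add: adj_mult)
  also have "\<dots> = X ** (?a X ** ?a (A ** Y ** A))" using Y1 by simp
  also have "\<dots> = X ** (?a X ** ?a A) ** (?a Y ** ?a A)" by (simp add: adj_mult matrix_mul_assoc)
  also have "\<dots> = X ** ?a (A ** X) ** ?a (A ** Y)" by (simp add: adj_mult)
  also have "\<dots> = X ** (A ** X) ** (A ** Y)" using X3 Y3 by simp
  also have "\<dots> = (X ** A ** X) ** A ** Y" by (simp add: matrix_mul_assoc)
  also have "\<dots> = X ** A ** Y" using X2 by simp
  finally have eX: "X = X ** A ** Y" .
  have "Y = (Y ** A) ** Y" using Y2 by simp
  also have "\<dots> = ?a (Y ** A) ** Y" using Y4 by simp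
  also have "\<dots> = ?a A ** ?a Y ** Y" by (simp add: adj_mult)
  also have "\<dots> = ?a (A ** X ** A) ** ?a Y ** Y" using X1 by simp
  also have "\<dots> = (?a A ** ?a X) ** (?a A ** ?a Y) ** Y" by (simp add: adj_mult matrix_mul_assoc)
  also have "\<dots> = ?a (X ** A) ** ?a (Y ** A) ** Y" by (simp add: adj_mult)
  also have "\<dots> = (X ** A) ** (Y ** A) ** Y" using X4 Y4 by simp
  also have "\<dots> = X ** A ** (Y ** A ** Y)" by (simp add: matrix_mul_assoc)
  also have "\<dots> = X ** A ** Y" using Y2 by simp
  finally have eY: "Y = X ** A ** Y" .
  show ?thesis using eX eY by simp
qed

lemma pinv_eq: "penrose A X \<Longrightarrow> pinv A = X"
  unfolding pinv_def by (rule the_equality) (auto intro: penrose_unique)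

definition Emat :: "'m \<Rightarrow> 'n \<Rightarrow> complex \<Rightarrow> complex ^ 'n ^ 'm" where
  "Emat a b \<alpha> = (\<chi> i j. if i = a \<and> j = b then \<alpha> else 0)"

lemma sum_if_eq: "(\<Sum>j\<in>(UNIV::'b::finite set). if j = b then f j else (0::'a::comm_monoid_add)) = f b"
  by (simp add: sum.delta')

lemma Emat_mult: "Emat a b \<alpha> ** Emat b c \<beta> = Emat a c (\<alpha> * \<beta>)"
proof -
  have "(\<Sum>j\<in>UNIV. (if i = a \<and> j = b then \<alpha> else 0) * (if j = b \<and> k = c then \<beta> else 0))
        = (if i = a \<and> k = c then \<alpha> * \<beta> else 0)" for i k
  proof -
    have "(\<Sum>j\<in>UNIV. (if i = a \<and> j = b then \<alpha> else 0) * (if j = b \<and> k = c then \<beta> else 0))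
        = (\<Sum>j\<in>UNIV. if j = b then (if i = a \<and> k = c then \<alpha> * \<beta> else 0) else 0)"
      by (rule sum.cong) auto
    then show ?thesis by (simp only: sum_if_eq)
  qed
  then show ?thesis unfolding Emat_def matrix_matrix_mult_def by (simp add: vec_eq_iff)
qed

lemma Emat_adj: "adjoint_cmat (Emat a b \<alpha>) = Emat b a (cnj \<alpha>)"
  unfolding adjoint_cmat_def Emat_def by (auto simp: vec_eq_iff)

lemma Emat_mult_axis: "Emat a b \<alpha> *v axis b \<beta> = axis a (\<alpha> * \<beta>)"
proof -
  have "(\<Sum>j\<in>UNIV. (if i = a \<and> j = b then \<alpha> else 0) * (if j = b then \<beta> else 0))
        = (if i = a then \<alpha> * \<beta> else 0)" for i
  proof -
    have "(\<Sum>j\<in>UNIV. (if i = a \<and> j = b then \<alpha> else 0) * (if j = b then \<beta> else 0))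
        = (\<Sum>j\<in>UNIV. if j = b then (if i = a then \<alpha> * \<beta> else 0) else 0)"
      by (rule sum.cong) auto
    then show ?thesis by (simp only: sum_if_eq)
  qed
  then show ?thesis unfolding Emat_def matrix_vector_mult_def axis_def by (simp add: vec_eq_iff)
qed

lemma Emat_0: "Emat a b 0 = 0"
  unfolding Emat_def by (simp add: vec_eq_iff)

lemma frob_Emat:
  fixes a :: "'m::finite" and b :: "'n::finite"
  shows "frob_norm (Emat a b \<alpha>) = cmod \<alpha>"
proof -
  have "(\<Sum>i\<in>UNIV. \<Sum>j\<in>UNIV. (cmod ((Emat a b \<alpha>) $ i $ j))\<^sup>2) = (\<Sum>i\<in>UNIV. if i = a then (cmod \<alpha>)\<^sup>2 else 0)"
  proof (rule sum.cong)
    fix i :: 'm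
    have "(\<Sum>j\<in>UNIV. (cmod ((Emat a b \<alpha>) $ i $ j))\<^sup>2) = (\<Sum>j\<in>UNIV. if j = b then (if i = a then (cmod \<alpha>)\<^sup>2 else 0) else 0)"
      by (rule sum.cong) (auto simp: Emat_def)
    then show "(\<Sum>j\<in>UNIV. (cmod ((Emat a b \<alpha>) $ i $ j))\<^sup>2) = (if i = a then (cmod \<alpha>)\<^sup>2 else 0)"
      by (simp only: sum_if_eq)
  qed simp
  then show ?thesis unfolding frob_norm_def by (simp only: sum_if_eq) simp
qed

lemma norm_axis_c: "norm (axis i (c::complex)) = cmod c"
proof -
  have "(\<Sum>j\<in>UNIV. (norm (axis i c $ j))\<^sup>2) = (\<Sum>j\<in>UNIV. if j = i then (cmod c)\<^sup>2 else 0)"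
    by (rule sum.cong) (auto simp: axis_def)
  then show ?thesis unfolding norm_vec_def L2_set_def by (simp only: sum_if_eq) simp
qed

lemma penrose_Emat:
  "penrose (Emat a b (complex_of_real v)) (Emat b a (complex_of_real (inverse v)))"
proof -
  have r1: "z * inverse z * z = z" for z :: complex
    by (cases "z = 0") simp_all
  have r2: "inverse z * z * inverse z = inverse z" for z :: complex
    by (cases "z = 0") simp_all
  show ?thesis unfolding penrose_def
    by (simp add: Emat_mult Emat_adj r1 r2)
qed

lemma pinv_Emat: "pinv (Emat a b (complex_of_real v)) = Emat b a (complex_of_real (inverse v))"
  by (rule pinv_eq[OF penrose_Emat])

lemma computable_zero: "computable_real_seq (\<lambda>_. 0)"
  using computable_const[of 0] by simp
lemma computable_one: "computable_real_seq (\<lambda>_. 1)"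
  using computable_const[of 1] by simp

lemma ccs_const01: "c = 0 \<or> c = 1 \<Longrightarrow> computable_complex_seq (\<lambda>_. c)"
  unfolding computable_complex_seq_def using computable_zero computable_one by auto

lemma ccs_xK: "computable_complex_seq (\<lambda>k. complex_of_real (xK k))"
  unfolding computable_complex_seq_def using computable_zero computable_xK by simp

lemma cmat_A: "computable_cmat_seq (\<lambda>k. Emat a b (complex_of_real (xK k)))"
  unfolding computable_cmat_seq_def
proof (intro allI)
  fix i j
  show "computable_complex_seq (\<lambda>k. Emat a b (complex_of_real (xK k)) $ i $ j)"
    by (cases "i = a \<and> j = b") (auto simp: Emat_def ccs_xK ccs_const01)
qed

lemma cvec_axis: "computable_cvec_seq (\<lambda>k. axis i (1::complex))"
  unfolding computable_cvec_seq_def axis_def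
  by (auto intro: ccs_const01)




theorem theorem3p1:
  assumes "CARD('m::finite) \<ge> 2" and "CARD('n::finite) \<ge> 2"
  shows
    "\<not> banach_mazur_computable computable_cmat_seq computable_cmat_seq
        (pinv :: complex ^ 'n ^ 'm \<Rightarrow> complex ^ 'm ^ 'n)
   \<and> \<not> banach_mazur_computable computable_cmat_seq computable_real_seq
        (\<lambda>A :: complex ^ 'n ^ 'm. frob_norm (pinv A))
   \<and> \<not> banach_mazur_computable computable_pair_seq computable_real_seq
        (\<lambda>(A :: complex ^ 'n ^ 'm, b). lsq_value A b)
   \<and> \<not> banach_mazur_computable computable_pair_seq computable_cvec_seq
        (\<lambda>(A :: complex ^ 'n ^ 'm, b). lsq_solution A b)
   \<and> \<not> banach_mazur_computable computable_pair_seq computable_real_seq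
        (\<lambda>(A :: complex ^ 'n ^ 'm, b). norm (lsq_solution A b))
   \<and> \<not> banach_mazur_computable computable_cmat_seq computable_real_seq
        (\<lambda>A :: complex ^ 'n ^ 'm. frob_norm A * frob_norm (pinv A))"
proof -
  obtain i0 :: 'm and j0 :: 'n where True by blast
  define A :: "nat \<Rightarrow> complex ^ 'n ^ 'm" where "A = (\<lambda>k. Emat i0 j0 (complex_of_real (xK k)))"
  define b :: "complex ^ 'm" where "b = axis i0 1"
  have cA: "computable_cmat_seq A" unfolding A_def by (rule cmat_A)
  have cP: "computable_pair_seq (\<lambda>k. (A k, b))"
    unfolding computable_pair_seq_def b_def using cA cvec_axis by simp
  have pA: "pinv (A k) = Emat j0 i0 (complex_of_real (inverse (xK k)))" for k
    unfolding A_def by (rule pinv_Emat)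
  have sol: "lsq_solution (A k) b = axis j0 (complex_of_real (inverse (xK k)))" for k
    unfolding lsq_solution_def pA b_def by (simp add: Emat_mult_axis)
  have inv_ge: "xK k \<noteq> 0 \<Longrightarrow> 1 \<le> inverse (xK k)" for k by (rule inverse_xK)
  have xnn: "0 \<le> xK k" for k by (rule xK_nonneg)
  show ?thesis
  proof (intro conjI notI)
    assume "banach_mazur_computable computable_cmat_seq computable_cmat_seq
        (pinv :: complex ^ 'n ^ 'm \<Rightarrow> complex ^ 'm ^ 'n)"
    then have "computable_cmat_seq (\<lambda>k. pinv (A k))" using cA unfolding banach_mazur_computable_def by blast
    then have "computable_complex_seq (\<lambda>k. pinv (A k) $ j0 $ i0)" unfolding computable_cmat_seq_def by blast
    then have "computable_real_seq (\<lambda>k. inverse (xK k))"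
      unfolding computable_complex_seq_def pA by (simp add: Emat_def del: of_real_inverse)
    then show False by (rule no_test1) (use inv_ge in auto)
  next
    assume "banach_mazur_computable computable_cmat_seq computable_real_seq
        (\<lambda>A :: complex ^ 'n ^ 'm. frob_norm (pinv A))"
    then have "computable_real_seq (\<lambda>k. frob_norm (pinv (A k)))" using cA unfolding banach_mazur_computable_def by blast
    then have "computable_real_seq (\<lambda>k. inverse (xK k))"
      unfolding pA frob_Emat using xnn by (simp del: of_real_inverse)
    then show False by (rule no_test1) (use inv_ge in auto)
  next
    assume "banach_mazur_computable computable_pair_seq computable_real_seq
        (\<lambda>(A :: complex ^ 'n ^ 'm, b). lsq_value A b)"
    then have c: "computable_real_seq (\<lambda>k. lsq_value (A k) b)" using cP unfolding banach_mazur_computable_def by fastforce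
    have v1: "lsq_value (A k) b = 0" if "xK k \<noteq> 0" for k
    proof -
      have "A k *v axis j0 (complex_of_real (inverse (xK k))) = b"
        unfolding A_def b_def using that by (simp add: Emat_mult_axis flip: of_real_mult)
      then have "0 \<in> range (\<lambda>x. norm (A k *v x - b))" by (metis (no_types, lifting) diff_self norm_zero rangeI)
      then show ?thesis unfolding lsq_value_def by (intro cInf_eq_minimum) auto
    qed
    have v0: "lsq_value (A k) b = 1" if "xK k = 0" for k
    proof -
      have "A k *v x - b = - b" for x unfolding A_def using that by (simp add: Emat_0)
      then have "range (\<lambda>x. norm (A k *v x - b)) = {1}" unfolding b_def by (simp add: norm_axis_c)
      then show ?thesis unfolding lsq_value_def by simp
    qed
    show False by (rule no_test2[OF c]) (use v1 v0 in auto)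
  next
    assume "banach_mazur_computable computable_pair_seq computable_cvec_seq
        (\<lambda>(A :: complex ^ 'n ^ 'm, b). lsq_solution A b)"
    then have "computable_cvec_seq (\<lambda>k. lsq_solution (A k) b)" using cP unfolding banach_mazur_computable_def by fastforce
    then have "computable_complex_seq (\<lambda>k. lsq_solution (A k) b $ j0)" unfolding computable_cvec_seq_def by blast
    then have "computable_real_seq (\<lambda>k. inverse (xK k))"
      unfolding computable_complex_seq_def sol by (simp del: of_real_inverse)
    then show False by (rule no_test1) (use inv_ge in auto)
  next
    assume "banach_mazur_computable computable_pair_seq computable_real_seq
        (\<lambda>(A :: complex ^ 'n ^ 'm, b). norm (lsq_solution A b))"
    then have "computable_real_seq (\<lambda>k. norm (lsq_solution (A k) b))" using cP unfolding banach_mazur_computable_def by fastforce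
    then have "computable_real_seq (\<lambda>k. inverse (xK k))"
      unfolding sol norm_axis_c using xnn by (simp del: of_real_inverse)
    then show False by (rule no_test1) (use inv_ge in auto)
  next
    assume "banach_mazur_computable computable_cmat_seq computable_real_seq
        (\<lambda>A :: complex ^ 'n ^ 'm. frob_norm A * frob_norm (pinv A))"
    then have c: "computable_real_seq (\<lambda>k. frob_norm (A k) * frob_norm (pinv (A k)))"
      using cA unfolding banach_mazur_computable_def by blast
    have "frob_norm (A k) * frob_norm (pinv (A k)) = (if xK k = 0 then 0 else 1)" for k
      unfolding pA unfolding A_def frob_Emat using xnn[of k] by (simp del: of_real_inverse)
    then show False using c by (intro no_test1[of "\<lambda>k. frob_norm (A k) * frob_norm (pinv (A k))"]) auto
  qed
qed


end
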